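(* Let $\mathbf b=(b_1,b_2)\in\mathbb N^2$ with $\gcd(b_1,b_2)=1$ and $b_\star=\min(b_1,b_2)\ge2$. For every integer $r\ge1$ and every $\boldsymbol\alpha=(\alpha_1,\dots,\alpha_r)\in(0,1)^r$, with $\overline R(n)$ as below, almost surely $$\lim_{n\to\infty}\overline R(n)\ \ge\ \frac1{\zeta(b_\star)}\ \ge\ \frac1{\zeta(2)}=\frac6{\pi^2},$$ where $\zeta$ is the Riemann zeta function.
   Context: $\mathbf b$-visibility: given two distinct lattice points $P=(p_1,p_2)$, $Q=(q_1,q_2)\in\mathbb Z^2$, they determine a curve through both of the form $a_1(y-q_2)^{b_1}=a_2(x-q_1)^{b_2}$ for some $(a_1,a_2)\in\mathbb Q^2\setminus\{(0,0)\}$; $P$ is $\mathbf b$-visible from $Q$ if no other lattice point lies on the segment of this curve between $P$ and $Q$; a point $P\neq(0,0)$ is $\mathbf b$-visible if it is $\mathbf b$-visible from the origin. An $\alpha$-random walk starting at the origin: $P_0=(0,0)$, $P_{i+1}=P_i+(1,0)$ with probability $\alpha$ and $P_{i+1}=P_i+(0,1)$ with probability $1-\alpha$, independently. Given mutually independent $\alpha_j$-random walks $(P^{(j)}_i)$, $1\le j\le r$, let $Y_i=1$ if all $P^{(j)}_i$, $1\le j\le r$, are $\mathbf b$-visible and $Y_i=0$ otherwise, and $\overline R(n)=\frac1n\sum_{i=1}^nY_i$ (the proportion of the first $n$ steps at which all $r$ walkers are simultaneously $\mathbf b$-visible). *)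

theory Defs
  imports "HOL-Probability.Probability"
begin

definition on_curve :: "nat \<times> nat \<Rightarrow> rat \<times> rat \<Rightarrow> int \<times> int \<Rightarrow> int \<times> int \<Rightarrow> bool" where
  "on_curve b a Q R \<longleftrightarrow>
     fst a * of_int ((snd R - snd Q) ^ fst b) = snd a * of_int ((fst R - fst Q) ^ snd b)"

text \<open>The segment of the curve between P and Q consists of the points of the curve lying in
  the closed box spanned by P and Q (on that box the curve is a single monotone arc).\<close>

definition in_box :: "int \<times> int \<Rightarrow> int \<times> int \<Rightarrow> int \<times> int \<Rightarrow> bool" where
  "in_box P Q R \<longleftrightarrow>
     min (fst P) (fst Q) \<le> fst R \<and> fst R \<le> max (fst P) (fst Q) \<and>
     min (snd P) (snd Q) \<le> snd R \<and> snd R \<le> max (snd P) (snd Q)"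

definition b_visible_from :: "nat \<times> nat \<Rightarrow> int \<times> int \<Rightarrow> int \<times> int \<Rightarrow> bool" where
  "b_visible_from b P Q \<longleftrightarrow> P \<noteq> Q \<and>
     (\<forall>a. a \<noteq> (0, 0) \<and> on_curve b a Q P \<longrightarrow>
        \<not> (\<exists>R. R \<noteq> P \<and> R \<noteq> Q \<and> on_curve b a Q R \<and> in_box P Q R))"

definition b_visible :: "nat \<times> nat \<Rightarrow> int \<times> int \<Rightarrow> bool" where
  "b_visible b P \<longleftrightarrow> P \<noteq> (0, 0) \<and> b_visible_from b P (0, 0)"

text \<open>Random walks: the sample point \<omega> assigns to walker j and step k a boolean;
  True means the (k+1)-st step of walker j is (1,0), False means (0,1).\<close>

definition walk_pos :: "(nat \<times> nat \<Rightarrow> bool) \<Rightarrow> nat \<Rightarrow> nat \<Rightarrow> int \<times> int" where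
  "walk_pos \<omega> j i = (int (card {k. k < i \<and> \<omega> (j, k)}), int (card {k. k < i \<and> \<not> \<omega> (j, k)}))"

definition walk_space :: "nat \<Rightarrow> (nat \<Rightarrow> real) \<Rightarrow> (nat \<times> nat \<Rightarrow> bool) measure" where
  "walk_space r \<alpha> = (\<Pi>\<^sub>M ji \<in> {1..r} \<times> UNIV. measure_pmf (bernoulli_pmf (\<alpha> (fst ji))))"

definition Rbar :: "nat \<times> nat \<Rightarrow> nat \<Rightarrow> (nat \<times> nat \<Rightarrow> bool) \<Rightarrow> nat \<Rightarrow> real" where
  "Rbar b r \<omega> n = (1 / real n) *
     (\<Sum>i = 1..n. if (\<forall>j \<in> {1..r}. b_visible b (walk_pos \<omega> j i)) then 1 else 0)"

definition zeta :: "nat \<Rightarrow> real" where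
  "zeta s = (\<Sum>n. 1 / real (Suc n) ^ s)"

end

theory Submission
  imports Defs
begin


lemma geo_sub_le:
  fixes \<rho> :: real and A :: "nat set"
  assumes "0 \<le> \<rho>" "\<rho> < 1" "finite A" "inj_on g A"
  shows "(\<Sum>x\<in>A. \<rho> ^ g x) \<le> 1 / (1 - \<rho>)"
proof -
  have "(\<Sum>x\<in>A. \<rho> ^ g x) = (\<Sum>d\<in>g ` A. \<rho> ^ d)" using assms(4) by (simp add: sum.reindex)
  also have "\<dots> \<le> (\<Sum>d. \<rho> ^ d)"
    by (rule sum_le_suminf) (use assms in \<open>auto intro: summable_geometric\<close>)
  also have "\<dots> = 1 / (1 - \<rho>)" using assms by (simp add: suminf_geometric)
  finally show ?thesis .
qed

lemma geo_dist:
  fixes \<rho> :: real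
  assumes "0 \<le> \<rho>" "\<rho> < 1"
  shows "(\<Sum>i'\<in>{1..n}. \<rho> ^ (if i' \<le> i then i - i' else i' - i)) \<le> 2 / (1 - \<rho>)"
proof -
  let ?A = "{1..n} \<inter> {..i}" and ?B = "{1..n} - {..i}"
  have "(\<Sum>i'\<in>{1..n}. \<rho> ^ (if i' \<le> i then i - i' else i' - i)) =
      (\<Sum>i'\<in>?A. \<rho> ^ (if i' \<le> i then i - i' else i' - i)) + (\<Sum>i'\<in>?B. \<rho> ^ (if i' \<le> i then i - i' else i' - i))"
    by (rule sum.Int_Diff) simp
  also have "(\<Sum>i'\<in>?A. \<rho> ^ (if i' \<le> i then i - i' else i' - i)) = (\<Sum>i'\<in>?A. \<rho> ^ (i - i'))"
    by (rule sum.cong) auto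
  also have "(\<Sum>i'\<in>?B. \<rho> ^ (if i' \<le> i then i - i' else i' - i)) = (\<Sum>i'\<in>?B. \<rho> ^ (i' - i))"
    by (rule sum.cong) auto
  also have "(\<Sum>i'\<in>?A. \<rho> ^ (i - i')) \<le> 1 / (1 - \<rho>)"
    by (rule geo_sub_le) (use assms in \<open>auto simp: inj_on_def\<close>)
  also have "(\<Sum>i'\<in>?B. \<rho> ^ (i' - i)) \<le> 1 / (1 - \<rho>)"
    by (rule geo_sub_le) (use assms in \<open>auto simp: inj_on_def\<close>)
  finally show ?thesis by simp
qed

lemma sqrt_bracket: "\<exists>s::nat. s\<^sup>2 \<le> n \<and> n < (Suc s)\<^sup>2"
proof (induction n)
  case 0 show ?case by (intro exI[of _ 0]) simp
next
  case (Suc n)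
  then obtain s where s: "s\<^sup>2 \<le> n" "n < (Suc s)\<^sup>2" by blast
  show ?case
  proof (cases "Suc n < (Suc s)\<^sup>2")
    case True then show ?thesis using s by (intro exI[of _ s]) auto
  next
    case False
    then have "Suc n = (Suc s)\<^sup>2" using s by auto
    then show ?thesis by (intro exI[of _ "Suc s"]) (auto simp: power2_eq_square)
  qed
qed

lemma interp:
  fixes a :: "nat \<Rightarrow> complex"
  assumes bnd: "\<And>i. cmod (a i) \<le> 1"
    and ev: "\<And>q::nat. eventually (\<lambda>m. cmod (\<Sum>i\<in>{1..(Suc m)\<^sup>2}. a i) < real ((Suc m)\<^sup>2) / real (Suc q)) sequentially"
  shows "(\<lambda>n. (\<Sum>i\<in>{1..n}. a i) / of_nat n) \<longlonglongrightarrow> 0"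
proof (rule LIMSEQ_I)
  fix e :: real assume e: "0 < e"
  obtain q :: nat where q: "inverse (real (Suc q)) < e / 2"
    using reals_Archimedean[of "e/2"] e by auto
  obtain m0 where m0: "\<And>m. m \<ge> m0 \<Longrightarrow> cmod (\<Sum>i\<in>{1..(Suc m)\<^sup>2}. a i) < real ((Suc m)\<^sup>2) / real (Suc q)"
    using ev[of q] unfolding eventually_sequentially by blast
  obtain K :: nat where K: "4 / e < real K" using reals_Archimedean2 by blast
  show "\<exists>N. \<forall>n\<ge>N. norm ((\<Sum>i\<in>{1..n}. a i) / of_nat n - 0) < e"
  proof (intro exI[of _ "(m0 + K + 2)\<^sup>2"] allI impI)
    fix n assume n: "(m0 + K + 2)\<^sup>2 \<le> n"
    obtain s where s: "s\<^sup>2 \<le> n" "n < (Suc s)\<^sup>2" using sqrt_bracket by blast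
    have sge: "s \<ge> m0 + K + 2"
    proof (rule ccontr)
      assume "\<not> ?thesis"
      then have "Suc s \<le> m0 + K + 2" by simp
      then have "(Suc s)\<^sup>2 \<le> (m0 + K + 2)\<^sup>2" by (rule power_mono) simp
      with s n show False by simp
    qed
    define m where "m = s - 1"
    have sm: "s = Suc m" using sge m_def by simp
    have mm0: "m \<ge> m0" using sge sm by simp
    have split: "(\<Sum>i\<in>{1..n}. a i) = (\<Sum>i\<in>{1..s\<^sup>2}. a i) + (\<Sum>i\<in>{s\<^sup>2 + 1..s\<^sup>2 + (n - s\<^sup>2)}. a i)"
      using sum.ub_add_nat[of 1 "s\<^sup>2" a "n - s\<^sup>2"] s by simp
    have tail: "cmod (\<Sum>i\<in>{s\<^sup>2 + 1..s\<^sup>2 + (n - s\<^sup>2)}. a i) \<le> real (n - s\<^sup>2)"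
      using sum_norm_le[of "{s\<^sup>2 + 1..s\<^sup>2 + (n - s\<^sup>2)}" a "\<lambda>_. 1"] bnd by simp
    have gap: "real (n - s\<^sup>2) \<le> 2 * real s"
    proof -
      have "n < s\<^sup>2 + 2 * s + 1" using s(2) by (simp add: power2_eq_square)
      then show ?thesis using s(1) by linarith
    qed
    have head: "cmod (\<Sum>i\<in>{1..s\<^sup>2}. a i) < real (s\<^sup>2) * (e / 2)"
    proof -
      have "cmod (\<Sum>i\<in>{1..s\<^sup>2}. a i) < real (s\<^sup>2) / real (Suc q)" using m0[OF mm0] sm by simp
      also have "\<dots> = real (s\<^sup>2) * inverse (real (Suc q))" by (simp add: field_simps)
      also have "\<dots> \<le> real (s\<^sup>2) * (e / 2)" using q by (intro mult_left_mono) auto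
      finally show ?thesis .
    qed
    have spos: "real s > 0" using sge by simp
    have nge: "real n \<ge> real (s\<^sup>2)" using s by simp
    have s2: "real (s\<^sup>2) = real s * real s" by (simp add: power2_eq_square)
    have Ks: "real K \<le> real s" using sge by simp
    have "2 * real s \<le> real (s\<^sup>2) * (e / 2)"
    proof -
      have "4 / e < real s" using K Ks by linarith
      then have "4 < real s * e" using e by (simp add: field_simps)
      then have "real s / 2 * 4 \<le> real s / 2 * (real s * e)" using spos by (intro mult_left_mono) auto
      then show ?thesis unfolding s2 by (simp add: algebra_simps)
    qed
    moreover have "cmod (\<Sum>i\<in>{1..n}. a i) \<le> cmod (\<Sum>i\<in>{1..s\<^sup>2}. a i) + cmod (\<Sum>i\<in>{s\<^sup>2 + 1..s\<^sup>2 + (n - s\<^sup>2)}. a i)"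
      unfolding split by (rule norm_triangle_ineq)
    ultimately have "cmod (\<Sum>i\<in>{1..n}. a i) < real (s\<^sup>2) * e"
      using head tail gap by linarith
    also have "\<dots> \<le> real n * e" using nge e by (intro mult_right_mono) auto
    finally have lt: "cmod (\<Sum>i\<in>{1..n}. a i) < real n * e" .
    have npos: "real n > 0" using nge s2 spos by (metis mult_pos_pos order_less_le_trans)
    show "norm ((\<Sum>i\<in>{1..n}. a i) / of_nat n - 0) < e"
      using lt npos by (simp add: norm_divide field_simps)
  qed
qed

lemma convex_unit_eq:
  fixes u v :: complex and a :: real
  assumes "0 < a" "a < 1" "cmod u = 1" "cmod v = 1" "cmod (of_real a * u + of_real (1 - a) * v) = 1"
  shows "u = v"
proof -
  have id: "complex_of_real ((cmod (of_real a * u + of_real (1 - a) * v))\<^sup>2) + of_real (a * (1 - a) * (cmod (u - v))\<^sup>2)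
      = of_real (a * (cmod u)\<^sup>2 + (1 - a) * (cmod v)\<^sup>2)"
    unfolding of_real_add of_real_mult complex_norm_square by (simp add: algebra_simps)
  have "(cmod (of_real a * u + of_real (1 - a) * v))\<^sup>2 + a * (1 - a) * (cmod (u - v))\<^sup>2
      = a * (cmod u)\<^sup>2 + (1 - a) * (cmod v)\<^sup>2"
    using id by (metis of_real_add of_real_eq_iff)
  then have "a * (1 - a) * (cmod (u - v))\<^sup>2 = 0" using assms by simp
  then have "cmod (u - v) = 0" using assms by simp
  then show ?thesis by simp
qed

lemma prod_eq1_each:
  fixes g :: "nat \<Rightarrow> real"
  assumes "finite A" "\<And>j. j \<in> A \<Longrightarrow> 0 \<le> g j" "\<And>j. j \<in> A \<Longrightarrow> g j \<le> 1" "(\<Prod>j\<in>A. g j) \<ge> 1" "j \<in> A"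
  shows "g j = 1"
proof -
  have "(\<Prod>j\<in>A. g j) = g j * (\<Prod>k\<in>A - {j}. g k)" using assms by (simp add: prod.remove)
  also have "\<dots> \<le> g j * 1"
    using assms by (intro mult_left_mono prod_le_1) auto
  finally show ?thesis using assms by force
qed

lemma geom_avg_conv:
  fixes L :: complex
  assumes "cmod L = 1"
  shows "convergent (\<lambda>n. (\<Sum>i\<in>{1..n}. L ^ i) / of_nat n)"
proof (cases "L = 1")
  case True
  have "(\<lambda>n. (\<Sum>i\<in>{1..n}. L ^ i) / of_nat n) \<longlonglongrightarrow> 1"
  proof (rule Lim_transform_eventually[OF tendsto_const])
    show "\<forall>\<^sub>F n in sequentially. 1 = (\<Sum>i\<in>{1..n}. L ^ i) / of_nat n"
      using eventually_ge_at_top[of 1] by eventually_elim (simp add: True)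
  qed
  then show ?thesis by (rule convergentI)
next
  case False
  have bnd: "cmod (\<Sum>i\<in>{1..n}. L ^ i) \<le> 2 / cmod (1 - L)" for n
  proof (cases "n \<ge> 1")
    case True
    have "(1 - L) * (\<Sum>i\<in>{1..n}. L ^ i) = L ^ 1 - L ^ Suc n" by (rule sum_gp_multiplied) (use True in auto)
    then have "cmod (1 - L) * cmod (\<Sum>i\<in>{1..n}. L ^ i) = cmod (L - L ^ Suc n)" by (simp flip: norm_mult)
    also have "\<dots> \<le> cmod L + cmod (L ^ Suc n)" by (rule norm_triangle_ineq4)
    also have "\<dots> = 2" using assms by (simp add: norm_power norm_mult)
    finally show ?thesis using False by (simp add: field_simps)
  next
    case False then show ?thesis by simp
  qed
  have "(\<lambda>n. (\<Sum>i\<in>{1..n}. L ^ i) / of_nat n) \<longlonglongrightarrow> 0"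
  proof (rule Lim_null_comparison)
    show "\<forall>\<^sub>F n in sequentially. cmod ((\<Sum>i\<in>{1..n}. L ^ i) / of_nat n) \<le> (2 / cmod (1 - L)) / real n"
    proof (intro always_eventually allI)
      fix n
      have "cmod (\<Sum>i\<in>{1..n}. L ^ i) / real n \<le> (2 / cmod (1 - L)) / real n"
        using bnd[of n] by (rule divide_right_mono) simp
      then show "cmod ((\<Sum>i\<in>{1..n}. L ^ i) / of_nat n) \<le> (2 / cmod (1 - L)) / real n"
        by (simp add: norm_divide)
    qed
    show "(\<lambda>n. (2 / cmod (1 - L)) / real n) \<longlonglongrightarrow> 0" by (rule lim_const_over_n)
  qed
  then show ?thesis by (rule convergentI)
qed



lemma core_nt:
  fixes X Y u v b1 b2 :: nat
  assumes cop: "coprime b1 b2" and b1: "b1 \<ge> 1" and b2: "b2 \<ge> 1"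
    and u: "u \<ge> 1" and v: "v \<ge> 1" and uX: "u \<le> X" and vY: "v \<le> Y" and ne: "(u, v) \<noteq> (X, Y)"
    and eq: "v ^ b1 * X ^ b2 = Y ^ b1 * u ^ b2"
  shows "\<exists>p. prime p \<and> p ^ b1 dvd X \<and> p ^ b2 dvd Y"
proof -
  have X0: "X \<noteq> 0" and Y0: "Y \<noteq> 0" and u0: "u \<noteq> 0" and v0: "v \<noteq> 0" using u v uX vY by auto
  have meq: "b1 * multiplicity p v + b2 * multiplicity p X = b1 * multiplicity p Y + b2 * multiplicity p u"
    if p: "prime p" for p
  proof -
    have pe: "prime_elem p" using p by simp
    have "multiplicity p (v ^ b1 * X ^ b2) = multiplicity p (Y ^ b1 * u ^ b2)" using eq by simp
    then show ?thesis
      using X0 Y0 u0 v0 pe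
      by (simp add: prime_elem_multiplicity_mult_distrib prime_elem_multiplicity_power_distrib)
  qed
  have "\<exists>p. prime p \<and> multiplicity p u < multiplicity p X"
  proof (rule ccontr)
    assume nex: "\<not> ?thesis"
    have le: "multiplicity p X \<le> multiplicity p u" if "prime p" for p
      using nex that not_le by blast
    have "X dvd u" by (rule multiplicity_le_imp_dvd[OF X0 le])
    then have "X \<le> u" using u0 dvd_imp_le by blast
    then have uX': "u = X" using uX by simp
    then have "v ^ b1 * X ^ b2 = Y ^ b1 * X ^ b2" using eq by simp
    then have "v ^ b1 = Y ^ b1" using X0 by simp
    then have "v = Y" using b1 power_eq_iff_eq_base[of b1 v Y] by simp
    with uX' ne show False by simp
  qed
  then obtain p where p: "prime p" and lt: "multiplicity p u < multiplicity p X" by blast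
  define mX mu mY mv where "mX = int (multiplicity p X)" "mu = int (multiplicity p u)"
    "mY = int (multiplicity p Y)" "mv = int (multiplicity p v)"
  have ieq: "int b2 * (mX - mu) = int b1 * (mY - mv)"
  proof -
    have h: "int b1 * mv + int b2 * mX = int b1 * mY + int b2 * mu"
    proof -
      have "int (b1 * multiplicity p v + b2 * multiplicity p X) = int (b1 * multiplicity p Y + b2 * multiplicity p u)"
        using meq[OF p] by (rule arg_cong)
      then show ?thesis unfolding mX_mu_mY_mv_def by (simp only: of_nat_add of_nat_mult)
    qed
    show ?thesis unfolding right_diff_distrib using h by linarith
  qed
  have dpos: "mX - mu > 0" using lt unfolding mX_mu_mY_mv_def by simp
  have copi: "coprime (int b1) (int b2)" using cop by simp
  have "int b1 dvd int b2 * (mX - mu)" using ieq by simp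
  then have "int b1 dvd (mX - mu)" using copi coprime_dvd_mult_right_iff by blast
  then have d1: "mX - mu \<ge> int b1" using dpos zdvd_imp_le by blast
  have "int b2 * (mX - mu) \<ge> int b2 * int b1" using d1 by (intro mult_left_mono) auto
  then have "int b1 * (mY - mv) \<ge> int b1 * int b2" using ieq by (simp add: mult.commute)
  then have d2: "mY - mv \<ge> int b2" using b1 mult_le_cancel_left_pos[of "int b1" "int b2" "mY - mv"] by simp
  have "b1 \<le> multiplicity p X" using d1 unfolding mX_mu_mY_mv_def by simp
  then have "p ^ b1 dvd X" using X0 p power_dvd_iff_le_multiplicity[of X p b1] by (auto dest: prime_gt_1_nat)
  moreover have "p ^ b2 dvd Y"
  proof -
    have "b2 \<le> multiplicity p Y" using d2 unfolding mX_mu_mY_mv_def by simp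
    then show ?thesis using Y0 p power_dvd_iff_le_multiplicity[of Y p b2] by (auto dest: prime_gt_1_nat)
  qed
  ultimately show ?thesis using p by blast
qed

lemma vis_iff:
  fixes X Y b1 b2 :: nat
  assumes cop: "coprime b1 b2" and b1: "b1 \<ge> 1" and b2: "b2 \<ge> 1" and X: "X \<ge> 1" and Y: "Y \<ge> 1"
  shows "b_visible (b1, b2) (int X, int Y) \<longleftrightarrow> \<not> (\<exists>p. prime p \<and> p ^ b1 dvd X \<and> p ^ b2 dvd Y)"
proof
  assume vis: "b_visible (b1, b2) (int X, int Y)"
  show "\<not> (\<exists>p. prime p \<and> p ^ b1 dvd X \<and> p ^ b2 dvd Y)"
  proof
    assume "\<exists>p. prime p \<and> p ^ b1 dvd X \<and> p ^ b2 dvd Y"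
    then obtain p X' Y' where p: "prime p" and XX: "X = p ^ b1 * X'" and YY: "Y = p ^ b2 * Y'"
      by (auto elim!: dvdE)
    have p2: "p \<ge> 2" using p by (simp add: prime_ge_2_nat)
    have X'1: "X' \<ge> 1" using X XX by (cases "X' = 0") auto
    have Y'1: "Y' \<ge> 1" using Y YY by (cases "Y' = 0") auto
    have "p ^ 1 \<le> p ^ b1" using b1 p2 by (intro power_increasing) auto
    then have "2 \<le> p ^ b1" using p2 by simp
    then have "2 * X' \<le> p ^ b1 * X'" by (rule mult_right_mono) simp
    then have X'lt: "X' < X" using X'1 XX by linarith
    have YY': "Y' \<le> Y" using YY p2 by (simp add: dvd_imp_le)
    define a where "a = (rat_of_int (int X ^ b2), rat_of_int (int Y ^ b1))"
    have a0: "a \<noteq> (0, 0)" using X unfolding a_def by auto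
    have onP: "on_curve (b1, b2) a (0, 0) (int X, int Y)"
      unfolding on_curve_def a_def by (simp add: mult.commute)
    have keyeq: "(p ^ b1 * X') ^ b2 * Y' ^ b1 = (p ^ b2 * Y') ^ b1 * X' ^ b2"
    proof -
      have e1: "(p ^ b1 * X') ^ b2 = p ^ (b1 * b2) * X' ^ b2" by (simp add: power_mult_distrib power_mult)
      have e2: "(p ^ b2 * Y') ^ b1 = p ^ (b1 * b2) * Y' ^ b1"
        by (simp add: power_mult_distrib power_mult[of p b2 b1, symmetric] mult.commute[of b2 b1])
      show ?thesis unfolding e1 e2 by (simp only: ac_simps)
    qed
    have onR: "on_curve (b1, b2) a (0, 0) (int X', int Y')"
    proof -
      have "int ((p ^ b1 * X') ^ b2 * Y' ^ b1) = int ((p ^ b2 * Y') ^ b1 * X' ^ b2)" using keyeq by simp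
      then have "rat_of_int (int X ^ b2 * int Y' ^ b1) = rat_of_int (int Y ^ b1 * int X' ^ b2)"
        unfolding XX YY by simp
      then show ?thesis unfolding on_curve_def a_def by simp
    qed
    have box: "in_box (int X, int Y) (0, 0) (int X', int Y')"
      unfolding in_box_def using X'lt YY' by auto
    have "(int X', int Y') \<noteq> (int X, int Y)" using X'lt by auto
    moreover have "(int X', int Y') \<noteq> (0, 0)" using X'1 by auto
    ultimately show False using vis a0 onP onR box unfolding b_visible_def b_visible_from_def by blast
  qed
next
  assume nop: "\<not> (\<exists>p. prime p \<and> p ^ b1 dvd X \<and> p ^ b2 dvd Y)"
  show "b_visible (b1, b2) (int X, int Y)"
  proof (rule ccontr)
    assume nv: "\<not> b_visible (b1, b2) (int X, int Y)"
    have P0: "(int X, int Y) \<noteq> (0, 0)" using X by auto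
    obtain a R where a0: "a \<noteq> (0, 0)" and onP: "on_curve (b1, b2) a (0, 0) (int X, int Y)"
      and RP: "R \<noteq> (int X, int Y)" and R0: "R \<noteq> (0, 0)" and onR: "on_curve (b1, b2) a (0, 0) R"
      and box: "in_box (int X, int Y) (0, 0) R"
      using nv P0 unfolding b_visible_def b_visible_from_def by blast
    obtain a1 a2 where a: "a = (a1, a2)" by (cases a)
    obtain u' v' where R: "R = (u', v')" by (cases R)
    have h1: "a1 * rat_of_int (int Y ^ b1) = a2 * rat_of_int (int X ^ b2)"
      using onP unfolding on_curve_def a by simp
    have h2: "a1 * rat_of_int (v' ^ b1) = a2 * rat_of_int (u' ^ b2)"
      using onR unfolding on_curve_def a R by simp
    have u'r: "0 \<le> u'" "u' \<le> int X" and v'r: "0 \<le> v'" "v' \<le> int Y"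
      using box unfolding in_box_def R by auto
    have Xp: "rat_of_int (int X ^ b2) \<noteq> 0" and Yp: "rat_of_int (int Y ^ b1) \<noteq> 0" using X Y by auto
    have a1nz: "a1 \<noteq> 0"
    proof
      assume "a1 = 0"
      then have "a2 = 0" using h1 Xp X by simp
      with \<open>a1 = 0\<close> a0 a show False by simp
    qed
    have a2nz: "a2 \<noteq> 0"
    proof
      assume "a2 = 0"
      then have "a1 = 0" using h1 Yp Y by simp
      with \<open>a2 = 0\<close> a0 a show False by simp
    qed
    have u'nz: "u' \<noteq> 0"
    proof
      assume "u' = 0"
      then have "rat_of_int (v' ^ b1) = 0" using h2 a1nz b1 b2 by (simp add: power_0_left)
      then have "v' = 0" using b1 by simp
      with \<open>u' = 0\<close> R0 R show False by simp
    qed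
    have v'nz: "v' \<noteq> 0"
    proof
      assume "v' = 0"
      then have "rat_of_int (u' ^ b2) = 0" using h2 a2nz b1 b2 by (simp add: power_0_left)
      then have "u' = 0" using b2 by simp
      with \<open>v' = 0\<close> R0 R show False by simp
    qed
    have "a1 * a2 * rat_of_int (v' ^ b1 * int X ^ b2) = (a1 * rat_of_int (v' ^ b1)) * (a2 * rat_of_int (int X ^ b2))"
      by (simp add: ac_simps)
    also have "\<dots> = (a2 * rat_of_int (u' ^ b2)) * (a1 * rat_of_int (int Y ^ b1))" using h1 h2 by simp
    also have "\<dots> = a1 * a2 * rat_of_int (int Y ^ b1 * u' ^ b2)" by (simp add: ac_simps)
    finally have "rat_of_int (v' ^ b1 * int X ^ b2) = rat_of_int (int Y ^ b1 * u' ^ b2)"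
      using a1nz a2nz by simp
    then have ieq: "v' ^ b1 * int X ^ b2 = int Y ^ b1 * u' ^ b2" by (simp only: of_int_eq_iff)
    define u v where "u = nat u'" "v = nat v'"
    have uu: "u' = int u" and vv: "v' = int v" using u'r v'r unfolding u_v_def by auto
    have neq: "v ^ b1 * X ^ b2 = Y ^ b1 * u ^ b2" using ieq unfolding uu vv by (simp flip: of_nat_power of_nat_mult)
    have "\<exists>p. prime p \<and> p ^ b1 dvd X \<and> p ^ b2 dvd Y"
    proof (rule core_nt[OF cop b1 b2 _ _ _ _ _ neq])
      show "u \<ge> 1" using u'nz uu by simp
      show "v \<ge> 1" using v'nz vv by simp
      show "u \<le> X" using u'r uu by simp
      show "v \<le> Y" using v'r vv by simp
      show "(u, v) \<noteq> (X, Y)" using RP R uu vv by auto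
    qed
    with nop show False by blast
  qed
qed



lemma card_mult_le:
  assumes d: "d \<ge> (1::nat)"
  shows "real (card {i\<in>{1..n}. d dvd i}) \<le> real n / real d"
proof -
  have "{i\<in>{1..n}. d dvd i} \<subseteq> (\<lambda>q. d * q) ` {1..n div d}"
  proof
    fix i assume i: "i \<in> {i\<in>{1..n}. d dvd i}"
    then obtain q where q: "i = d * q" by (auto elim: dvdE)
    have "q \<ge> 1" using i q by (cases "q = 0") auto
    moreover have "q \<le> n div d"
    proof -
      have "(d * q) div d \<le> n div d" using i q by (intro div_le_mono) auto
      then show ?thesis using d by simp
    qed
    ultimately show "i \<in> (\<lambda>q. d * q) ` {1..n div d}" using q by auto
  qed
  then have "card {i\<in>{1..n}. d dvd i} \<le> card ((\<lambda>q. d * q) ` {1..n div d})" by (intro card_mono) auto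
  also have "\<dots> \<le> card {1..n div d}" by (rule card_image_le) simp
  also have "\<dots> = n div d" by simp
  finally have "real (card {i\<in>{1..n}. d dvd i}) \<le> real (n div d)" by simp
  also have "\<dots> \<le> real n / real d" by (rule of_nat_div_le_of_nat)
  finally show ?thesis .
qed

lemma inv_sq_tail:
  assumes N: "N \<ge> (1::nat)"
  shows "(\<Sum>m\<in>{N+1..n}. 1 / real m ^ 2) \<le> 1 / real N"
proof -
  have "(\<Sum>m\<in>{N+1..n}. 1 / real m ^ 2) \<le> 1 / real N - 1 / real n" if "n \<ge> N" for n
    using that
  proof (induction n rule: dec_induct)
    case base then show ?case by simp
  next
    case (step n)
    have n1: "real n \<ge> 1" using step N by simp
    have "(\<Sum>m\<in>{N+1..Suc n}. 1 / real m ^ 2) = (\<Sum>m\<in>{N+1..n}. 1 / real m ^ 2) + 1 / real (Suc n) ^ 2"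
      using step by (simp add: sum.cl_ivl_Suc)
    also have "\<dots> \<le> 1 / real N - 1 / real n + 1 / real (Suc n) ^ 2" using step by simp
    also have "1 / real (Suc n) ^ 2 \<le> 1 / real n - 1 / real (Suc n)"
    proof -
      have "1 / real n - 1 / real (Suc n) = 1 / (real n * real (Suc n))" using n1 by (simp add: field_simps)
      also have "1 / real (Suc n) ^ 2 \<le> 1 / (real n * real (Suc n))"
        using n1 by (intro divide_left_mono) (auto simp: power2_eq_square intro!: mult_right_mono)
      finally show ?thesis by simp
    qed
    finally show ?case by simp
  qed
  note H = this
  show ?thesis
  proof (cases "n \<ge> N")
    case True
    have "1 / real N - 1 / real n \<le> 1 / real N" by simp
    then show ?thesis using H[OF True] by linarith
  next
    case False
    then have "{N+1..n} = {}" by auto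
    then show ?thesis by simp
  qed
qed

lemma sum_ind_card: "finite A \<Longrightarrow> (\<Sum>i\<in>A. if P i then 1 else 0 :: real) = real (card {i\<in>A. P i})"
  by (simp add: sum.If_cases Int_def conj_commute)

lemma tail_count:
  assumes N: "N \<ge> (1::nat)" and k: "k \<ge> 2"
  shows "real (card {i\<in>{1..n}. \<exists>p. prime p \<and> N < p \<and> p ^ k dvd i}) \<le> real n / real N"
proof -
  have sub: "{i\<in>{1..n}. \<exists>p. prime p \<and> N < p \<and> p ^ k dvd i} \<subseteq> (\<Union>m\<in>{N+1..n}. {i\<in>{1..n}. m ^ 2 dvd i})"
  proof
    fix i assume "i \<in> {i\<in>{1..n}. \<exists>p. prime p \<and> N < p \<and> p ^ k dvd i}"
    then obtain p where i: "i \<in> {1..n}" and p: "prime p" "N < p" "p ^ k dvd i" by blast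
    have "p ^ 2 dvd p ^ k" using k by (simp add: le_imp_power_dvd)
    then have p2: "p ^ 2 dvd i" using p(3) by (rule dvd_trans)
    have "p \<le> p ^ 2" by (simp add: power2_eq_square)
    also have "\<dots> \<le> i" using p2 i by (intro dvd_imp_le) auto
    finally have "p \<le> n" using i by simp
    then show "i \<in> (\<Union>m\<in>{N+1..n}. {i\<in>{1..n}. m ^ 2 dvd i})" using p p2 i by auto
  qed
  have "card {i\<in>{1..n}. \<exists>p. prime p \<and> N < p \<and> p ^ k dvd i} \<le> card (\<Union>m\<in>{N+1..n}. {i\<in>{1..n}. m ^ 2 dvd i})"
    by (rule card_mono[OF _ sub]) auto
  also have "\<dots> \<le> (\<Sum>m\<in>{N+1..n}. card {i\<in>{1..n}. m ^ 2 dvd i})" by (rule card_UN_le) simp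
  finally have "real (card {i\<in>{1..n}. \<exists>p. prime p \<and> N < p \<and> p ^ k dvd i}) \<le> (\<Sum>m\<in>{N+1..n}. real (card {i\<in>{1..n}. m ^ 2 dvd i}))"
    by (simp flip: of_nat_sum)
  also have "\<dots> \<le> (\<Sum>m\<in>{N+1..n}. real n / real (m ^ 2))"
    by (rule sum_mono, rule card_mult_le) (use N in auto)
  also have "\<dots> = real n * (\<Sum>m\<in>{N+1..n}. 1 / real m ^ 2)" by (simp add: sum_distrib_left)
  also have "\<dots> \<le> real n * (1 / real N)" by (rule mult_left_mono[OF inv_sq_tail[OF N]]) simp
  finally show ?thesis by simp
qed



lemma inv_pow_le_sq:
  assumes "s \<ge> 2"
  shows "1 / real (Suc n) ^ s \<le> 1 / real (Suc n) ^ 2"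
proof -
  have "real (Suc n) ^ 2 \<le> real (Suc n) ^ s" using assms by (rule power_increasing) simp
  moreover have "0 < real (Suc n) ^ 2 * real (Suc n) ^ s" by simp
  ultimately show ?thesis by (intro divide_left_mono) auto
qed

lemma summable_inv_sq': "summable (\<lambda>m. 1 / real (Suc m) ^ 2)"
  using inverse_power_summable[of 2] by (subst summable_Suc_iff) (simp add: inverse_eq_divide)

lemma zeta_summable:
  assumes "s \<ge> 2" shows "summable (\<lambda>n. 1 / real (Suc n) ^ s)"
  by (rule summable_comparison_test[OF _ summable_inv_sq']) (use inv_pow_le_sq[OF assms] in auto)

lemma zeta_ge1: assumes "s \<ge> 2" shows "zeta s \<ge> 1"
proof -
  have "(\<Sum>n\<in>{0}. 1 / real (Suc n) ^ s) \<le> zeta s"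
    unfolding zeta_def by (rule sum_le_suminf[OF zeta_summable[OF assms]]) auto
  then show ?thesis by simp
qed

lemma zeta_le2: assumes "s \<ge> 2" shows "zeta s \<le> zeta 2"
  unfolding zeta_def by (rule suminf_le[OF _ zeta_summable[OF assms] summable_inv_sq']) (rule inv_pow_le_sq[OF assms])

lemma zeta2: "zeta 2 = pi ^ 2 / 6"
proof -
  have "(\<lambda>n. 1 / real (Suc n) ^ 2) = (\<lambda>n. 1 / (real n + 1) ^ 2)" by (simp add: add.commute)
  then show ?thesis unfolding zeta_def using inverse_squares_sums by (simp add: sums_iff)
qed

lemma partial_le_zeta:
  assumes "s \<ge> 2" shows "(\<Sum>m\<in>{1..n}. 1 / real m ^ s) \<le> zeta s"
proof -
  have "(\<Sum>m\<in>{1..n}. 1 / real m ^ s) = (\<Sum>m<n. 1 / real (Suc m) ^ s)"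
    by (simp add: sum.atLeast1_atMost_eq)
  also have "\<dots> \<le> zeta s" unfolding zeta_def by (rule sum_le_suminf[OF zeta_summable[OF assms]]) auto
  finally show ?thesis .
qed

definition kfree :: "nat \<Rightarrow> nat \<Rightarrow> bool" where
  "kfree k a \<longleftrightarrow> \<not> (\<exists>p. prime p \<and> p ^ k dvd a)"

definition Qf :: "nat \<Rightarrow> nat \<Rightarrow> nat" where
  "Qf k n = card {a\<in>{1..n}. kfree k a}"

lemma cover:
  assumes k: "k \<ge> 1"
  shows "n \<le> (\<Sum>m\<in>{1..n}. Qf k (n div m ^ k))"
proof -
  have sub: "{1..n} \<subseteq> (\<Union>m\<in>{1..n}. (\<lambda>a. a * m ^ k) ` {a\<in>{1..n div m ^ k}. kfree k a})"
  proof
    fix i assume i: "i \<in> {1..n}"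
    define S where "S = {m. 1 \<le> m \<and> m ^ k dvd i}"
    have Ssub: "S \<subseteq> {..i}"
    proof
      fix m assume "m \<in> S"
      then have m: "1 \<le> m" "m ^ k dvd i" by (auto simp: S_def)
      have "m \<le> m ^ k" using m k by (simp add: self_le_power)
      also have "\<dots> \<le> i" using m i by (intro dvd_imp_le) auto
      finally show "m \<in> {..i}" by simp
    qed
    have finS: "finite S" using Ssub finite_subset by blast
    have oneS: "1 \<in> S" by (simp add: S_def)
    define m where "m = Max S"
    have mS: "m \<in> S" unfolding m_def using finS oneS by (intro Max_in) auto
    have maxm: "m' \<le> m" if "m' \<in> S" for m' unfolding m_def using finS that by simp
    obtain a where a: "i = a * m ^ k" using mS by (auto simp: S_def elim!: dvdE simp: mult.commute)
    have m1: "m \<ge> 1" using mS by (simp add: S_def)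
    have a1: "a \<ge> 1" using a i by (cases "a = 0") auto
    have "a * m ^ k \<le> n" using a i by simp
    then have "(a * m ^ k) div m ^ k \<le> n div m ^ k" by (rule div_le_mono)
    then have an: "a \<le> n div m ^ k" using m1 by simp
    have kf: "kfree k a"
    proof (rule ccontr)
      assume "\<not> kfree k a"
      then obtain p where p: "prime p" "p ^ k dvd a" by (auto simp: kfree_def)
      then obtain b where b: "a = p ^ k * b" by (auto elim: dvdE)
      have "(p * m) ^ k dvd i" using a b by (simp add: power_mult_distrib mult.assoc mult.left_commute)
      then have "p * m \<in> S" using p m1 by (simp add: S_def prime_gt_0_nat Suc_le_eq)
      then have "p * m \<le> m" by (rule maxm)
      moreover have "p * m > m" using prime_gt_1_nat[OF p(1)] m1 by simp
      ultimately show False by simp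
    qed
    have mn: "m \<le> n" using mS Ssub i by auto
    show "i \<in> (\<Union>m\<in>{1..n}. (\<lambda>a. a * m ^ k) ` {a\<in>{1..n div m ^ k}. kfree k a})"
    proof (rule UN_I[of m])
      show "m \<in> {1..n}" using mn m1 by simp
      show "i \<in> (\<lambda>a. a * m ^ k) ` {a\<in>{1..n div m ^ k}. kfree k a}"
        by (rule image_eqI[of _ _ a]) (use a a1 an kf in auto)
    qed
  qed
  have "n = card {1..n}" by simp
  also have "\<dots> \<le> card (\<Union>m\<in>{1..n}. (\<lambda>a. a * m ^ k) ` {a\<in>{1..n div m ^ k}. kfree k a})"
    by (rule card_mono[OF _ sub]) auto
  also have "\<dots> \<le> (\<Sum>m\<in>{1..n}. card ((\<lambda>a. a * m ^ k) ` {a\<in>{1..n div m ^ k}. kfree k a}))"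
    by (rule card_UN_le) simp
  also have "\<dots> \<le> (\<Sum>m\<in>{1..n}. Qf k (n div m ^ k))"
    unfolding Qf_def by (intro sum_mono card_image_le) simp
  finally show ?thesis .
qed

lemma Qf0: "Qf k 0 = 0" by (simp add: Qf_def)

lemma kfree_contra:
  assumes k: "k \<ge> 2" and c0: "0 \<le> c" and cz: "c * zeta k < 1"
    and Qb: "\<And>n. real (Qf k n) \<le> c * real n + K0"
  shows False
proof -
  have K0: "0 \<le> K0" using Qb[of 0] by (simp add: Qf0)
  have main: "real q * (1 - c * zeta k) \<le> K0" if q1: "q \<ge> 1" for q
  proof -
    let ?n = "q\<^sup>2"
    have "real ?n \<le> (\<Sum>m\<in>{1..?n}. real (Qf k (?n div m ^ k)))"
      using cover[of k ?n] k by (simp flip: of_nat_sum)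
    also have "\<dots> \<le> (\<Sum>m\<in>{1..?n}. c * real ?n * (1 / real m ^ k) + (if m \<le> q then K0 else 0))"
    proof (rule sum_mono)
      fix m assume m: "m \<in> {1..?n}"
      show "real (Qf k (?n div m ^ k)) \<le> c * real ?n * (1 / real m ^ k) + (if m \<le> q then K0 else 0)"
      proof (cases "m \<le> q")
        case True
        have "real (Qf k (?n div m ^ k)) \<le> c * real (?n div m ^ k) + K0" by (rule Qb)
        also have "c * real (?n div m ^ k) \<le> c * (real ?n / real (m ^ k))"
          by (rule mult_left_mono[OF of_nat_div_le_of_nat c0])
        finally show ?thesis using True by simp
      next
        case False
        have "q\<^sup>2 < m\<^sup>2" using False by (simp add: power_strict_mono)
        also have "m\<^sup>2 \<le> m ^ k" using m k by (intro power_increasing) auto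
        finally have "?n div m ^ k = 0" by simp
        then show ?thesis using False c0 by (simp add: Qf0)
      qed
    qed
    also have "\<dots> = c * real ?n * (\<Sum>m\<in>{1..?n}. 1 / real m ^ k) + (\<Sum>m\<in>{1..?n}. if m \<le> q then K0 else 0)"
      by (simp add: sum.distrib sum_distrib_left)
    also have "(\<Sum>m\<in>{1..?n}. if m \<le> q then K0 else 0) = K0 * real (card {m\<in>{1..?n}. m \<le> q})"
    proof -
      have "(\<Sum>m\<in>{1..?n}. if m \<le> q then K0 else 0) = (\<Sum>m\<in>{1..?n}. K0 * (if m \<le> q then 1 else 0))"
        by (rule sum.cong) auto
      also have "\<dots> = K0 * (\<Sum>m\<in>{1..?n}. if m \<le> q then 1 else 0)" by (rule sum_distrib_left[symmetric])
      also have "\<dots> = K0 * real (card {m\<in>{1..?n}. m \<le> q})" by (subst sum_ind_card) auto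
      finally show ?thesis .
    qed
    also have "K0 * real (card {m\<in>{1..?n}. m \<le> q}) \<le> K0 * real q"
    proof -
      have "card {m\<in>{1..?n}. m \<le> q} \<le> card {1..q}" by (rule card_mono) auto
      then show ?thesis using K0 by (intro mult_left_mono) auto
    qed
    also have "c * real ?n * (\<Sum>m\<in>{1..?n}. 1 / real m ^ k) \<le> c * real ?n * zeta k"
      by (rule mult_left_mono[OF partial_le_zeta[OF k]]) (use c0 in simp)
    finally have "real q * real q \<le> c * (real q * real q) * zeta k + K0 * real q"
      by (simp add: power2_eq_square)
    then have "real q * (real q * (1 - c * zeta k)) \<le> real q * K0" by (simp add: algebra_simps)
    then show ?thesis using q1 by simp
  qed
  have pos: "1 - c * zeta k > 0" using cz by simp
  obtain q :: nat where q: "K0 / (1 - c * zeta k) < real q" using reals_Archimedean2 by blast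
  have "0 \<le> K0 / (1 - c * zeta k)" using K0 pos by simp
  then have q1: "q \<ge> 1" using q by (cases q) auto
  have "K0 < real q * (1 - c * zeta k)" using q pos by (simp add: field_simps)
  with main[OF q1] show False by simp
qed



lemma cauchy_approx:
  fixes A :: "nat \<Rightarrow> real" and B :: "nat \<Rightarrow> nat \<Rightarrow> real" and T :: real
  assumes conv: "\<And>N. convergent (B N)" and T0: "0 \<le> T"
    and close: "\<And>N n. N \<ge> 1 \<Longrightarrow> n \<ge> 1 \<Longrightarrow> \<bar>A n - B N n\<bar> \<le> T / real n + 1 / real N"
  shows "convergent A"
proof -
  have "Cauchy A"
  proof (rule metric_CauchyI)
    fix e :: real assume e: "0 < e"
    obtain N' :: nat where N': "inverse (real (Suc N')) < e / 4" using reals_Archimedean[of "e/4"] e by auto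
    define N where "N = Suc N'"
    have N1: "N \<ge> 1" and Ne: "1 / real N < e / 4" using N' by (auto simp: N_def inverse_eq_divide)
    have "Cauchy (B N)" using conv[of N] by (rule convergent_Cauchy)
    then obtain M0 where M0: "\<And>m n. m \<ge> M0 \<Longrightarrow> n \<ge> M0 \<Longrightarrow> dist (B N m) (B N n) < e / 4"
      by (meson metric_CauchyD e divide_pos_pos zero_less_numeral)
    obtain M1 :: nat where M1: "T / (e / 8) < real M1" using reals_Archimedean2 by blast
    have Tn: "T / real n < e / 8" if "n \<ge> Suc M1" for n
    proof -
      have npos: "real n > 0" using that by simp
      have "T < real M1 * (e / 8)" using M1 e by (simp add: field_simps)
      also have "\<dots> \<le> real n * (e / 8)" using that e by (intro mult_right_mono) auto
      finally show ?thesis using npos by (simp add: field_simps)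
    qed
    show "\<exists>M. \<forall>m\<ge>M. \<forall>n\<ge>M. dist (A m) (A n) < e"
    proof (intro exI[of _ "max M0 (Suc M1)"] allI impI)
      fix m n assume m: "max M0 (Suc M1) \<le> m" and n: "max M0 (Suc M1) \<le> n"
      have c1: "\<bar>A m - B N m\<bar> \<le> T / real m + 1 / real N" using close[OF N1] m by simp
      have c2: "\<bar>A n - B N n\<bar> \<le> T / real n + 1 / real N" using close[OF N1] n by simp
      have c3: "\<bar>B N m - B N n\<bar> < e / 4" using M0[of m n] m n by (simp add: dist_real_def)
      have t1: "T / real m < e / 8" using Tn m by simp
      have t2: "T / real n < e / 8" using Tn n by simp
      show "dist (A m) (A n) < e" unfolding dist_real_def using c1 c2 c3 t1 t2 Ne by linarith
    qed
  qed
  then show ?thesis by (simp add: Cauchy_convergent_iff)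
qed

lemma Qf_le: "Qf k n \<le> n"
proof -
  have "Qf k n \<le> card {1..n}" unfolding Qf_def by (rule card_mono) auto
  then show ?thesis by simp
qed

lemma lower_bound:
  fixes A :: "nat \<Rightarrow> real" and L K :: real
  assumes k: "k \<ge> 2" and lim: "A \<longlonglongrightarrow> L" and A0: "\<And>n. A n \<ge> 0"
    and Qb: "\<And>n. real (Qf k n) \<le> real n * A n + K"
  shows "L \<ge> 1 / zeta k"
proof (rule ccontr)
  assume "\<not> ?thesis"
  then have Llt: "L < 1 / zeta k" by simp
  have z1: "zeta k \<ge> 1" by (rule zeta_ge1[OF k])
  have L0: "L \<ge> 0" using lim A0 by (intro LIMSEQ_le_const[OF lim]) auto
  define c where "c = (L + 1 / zeta k) / 2"
  have c0: "0 \<le> c" using L0 z1 by (simp add: c_def)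
  have cL: "L < c" and cz': "c < 1 / zeta k" using Llt by (auto simp: c_def)
  have cz: "c * zeta k < 1" using cz' z1 by (simp add: field_simps)
  have "eventually (\<lambda>n. A n < c) sequentially" using lim cL by (rule order_tendstoD)
  then obtain n0 where n0: "\<And>n. n \<ge> n0 \<Longrightarrow> A n < c" unfolding eventually_sequentially by blast
  have K0: "K \<ge> 0" using Qb[of 0] by (simp add: Qf0)
  have "real (Qf k n) \<le> c * real n + (K + real n0)" for n
  proof (cases "n \<ge> n0")
    case True
    have "real n * A n \<le> real n * c" using n0[OF True] by (intro mult_left_mono) auto
    then show ?thesis using Qb[of n] by (simp add: mult.commute)
  next
    case False
    have "real (Qf k n) \<le> real n" using Qf_le[of k n] by simp
    also have "\<dots> \<le> real n0" using False by simp
    finally show ?thesis using c0 K0 by (smt (verit) mult_nonneg_nonneg of_nat_0_le_iff)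
  qed
  then show False by (rule kfree_contra[OF k c0 cz])
qed



locale walks =
  fixes r :: nat and \<alpha> :: "nat \<Rightarrow> real"
  assumes \<alpha>_pos: "\<And>j. j \<in> {1..r} \<Longrightarrow> 0 < \<alpha> j"
    and \<alpha>_lt1: "\<And>j. j \<in> {1..r} \<Longrightarrow> \<alpha> j < 1"
begin

abbreviation "Bm \<equiv> (\<lambda>ji::nat\<times>nat. measure_pmf (bernoulli_pmf (\<alpha> (fst ji))))"
abbreviation "Ix \<equiv> {1..r} \<times> (UNIV::nat set)"

lemma pps: "product_prob_space Bm"
  by (rule product_prob_spaceI) (simp add: prob_space_measure_pmf)

lemma prob_space_M: "prob_space (walk_space r \<alpha>)"
  unfolding walk_space_def by (rule prob_space_PiM) (simp add: prob_space_measure_pmf)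

lemma space_M: "space (walk_space r \<alpha>) = (\<Pi>\<^sub>E c\<in>Ix. UNIV)"
  unfolding walk_space_def by (simp add: space_PiM)

lemma int_bern:
  fixes g :: "bool \<Rightarrow> complex"
  assumes "0 \<le> p" "p \<le> 1"
  shows "(\<integral>x. g x \<partial>measure_pmf (bernoulli_pmf p)) = of_real p * g True + of_real (1 - p) * g False"
  using assms by (subst integral_measure_pmf[of UNIV]) (auto simp: UNIV_bool scaleR_conv_of_real)

lemma prod_expect:
  fixes f :: "nat \<times> nat \<Rightarrow> bool \<Rightarrow> complex"
  assumes J: "finite J" "J \<subseteq> Ix"
  shows "(\<integral>\<omega>. (\<Prod>c\<in>J. f c (\<omega> c)) \<partial>walk_space r \<alpha>)
       = (\<Prod>c\<in>J. of_real (\<alpha> (fst c)) * f c True + of_real (1 - \<alpha> (fst c)) * f c False)"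
proof -
  interpret product_prob_space Bm Ix by (rule pps)
  have "(\<integral>\<omega>. (\<Prod>c\<in>J. f c (\<omega> c)) \<partial>walk_space r \<alpha>)
      = (\<integral>\<omega>. (\<Prod>c\<in>J. f c (\<omega> c)) \<partial>distr (PiM Ix Bm) (PiM J Bm) (\<lambda>x. restrict x J))"
    by (subst integral_distr[OF measurable_restrict_subset[OF J(2)]]) (auto simp: walk_space_def intro!: Bochner_Integration.integral_cong)
  also have "\<dots> = (\<integral>\<omega>. (\<Prod>c\<in>J. f c (\<omega> c)) \<partial>PiM J Bm)"
    using distr_PiM_restrict_finite[OF J] by simp
  also have "\<dots> = (\<Prod>c\<in>J. \<integral>x. f c x \<partial>Bm c)"
    by (rule product_integral_prod) (auto intro!: integrable_measure_pmf_finite simp: J)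
  also have "\<dots> = (\<Prod>c\<in>J. of_real (\<alpha> (fst c)) * f c True + of_real (1 - \<alpha> (fst c)) * f c False)"
    apply (rule prod.cong[OF refl])
    apply (rule int_bern)
    using J \<alpha>_pos \<alpha>_lt1 by (force simp: less_imp_le)+
  finally show ?thesis .
qed

definition Phi :: "(nat \<Rightarrow> bool \<Rightarrow> complex) \<Rightarrow> nat \<Rightarrow> (nat \<times> nat \<Rightarrow> bool) \<Rightarrow> complex" where
  "Phi \<psi> i \<omega> = (\<Prod>c\<in>{1..r} \<times> {..<i}. \<psi> (fst c) (\<omega> c))"

definition phi :: "(nat \<Rightarrow> bool \<Rightarrow> complex) \<Rightarrow> complex" where
  "phi \<psi> = (\<Prod>j\<in>{1..r}. of_real (\<alpha> j) * \<psi> j True + of_real (1 - \<alpha> j) * \<psi> j False)"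

definition valid :: "(nat \<Rightarrow> bool \<Rightarrow> complex) \<Rightarrow> bool" where
  "valid \<psi> \<longleftrightarrow> (\<forall>j\<in>{1..r}. \<forall>b. cmod (\<psi> j b) = 1)"

lemma meas_Phi[measurable]: "Phi \<psi> i \<in> borel_measurable (walk_space r \<alpha>)"
proof -
  have "(\<lambda>\<omega>. \<psi> (fst c) (\<omega> c)) \<in> borel_measurable (walk_space r \<alpha>)" if "c \<in> Ix" for c
  proof -
    have "\<psi> (fst c) \<in> borel_measurable (Bm c)"
      by (subst measurable_cong_sets[OF sets_measure_pmf_count_space refl]) simp
    then show ?thesis unfolding walk_space_def
      by (rule measurable_compose[OF measurable_component_singleton[OF that]])
  qed
  then show ?thesis unfolding Phi_def by (intro borel_measurable_prod) auto
qed

lemma cnj_Phi: "cnj (Phi \<psi> i \<omega>) = Phi (\<lambda>j b. cnj (\<psi> j b)) i \<omega>"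
  unfolding Phi_def by simp

lemma meas_cnj_Phi[measurable]: "(\<lambda>\<omega>. cnj (Phi \<psi> i \<omega>)) \<in> borel_measurable (walk_space r \<alpha>)"
  unfolding cnj_Phi by (rule meas_Phi)

lemma norm_Phi: "valid \<psi> \<Longrightarrow> cmod (Phi \<psi> i \<omega>) = 1"
  unfolding Phi_def valid_def by (auto simp flip: prod_norm intro!: prod.neutral)

lemma cross_pointwise:
  assumes "valid \<psi>" "i' \<le> i"
  shows "Phi \<psi> i \<omega> * cnj (Phi \<psi> i' \<omega>) =
     (\<Prod>c\<in>{1..r} \<times> {..<i}. (if snd c < i' then 1 else \<psi> (fst c) (\<omega> c)))"
proof -
  let ?A = "{1..r} \<times> {..<i'}" and ?B = "{1..r} \<times> {i'..<i}"
  have split: "{1..r} \<times> {..<i} = ?A \<union> ?B" using assms(2) by auto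
  have disj: "?A \<inter> ?B = {}" by auto
  have one: "\<psi> (fst c) (\<omega> c) * cnj (\<psi> (fst c) (\<omega> c)) = 1" if "c \<in> ?A" for c
  proof -
    have "cmod (\<psi> (fst c) (\<omega> c)) = 1" using assms(1) that unfolding valid_def by auto
    then show ?thesis using complex_norm_square[of "\<psi> (fst c) (\<omega> c)"] by simp
  qed
  have "Phi \<psi> i \<omega> * cnj (Phi \<psi> i' \<omega>) =
      ((\<Prod>c\<in>?A. \<psi> (fst c) (\<omega> c)) * (\<Prod>c\<in>?B. \<psi> (fst c) (\<omega> c))) * (\<Prod>c\<in>?A. cnj (\<psi> (fst c) (\<omega> c)))"
    unfolding Phi_def split by (subst prod.union_disjoint) auto
  also have "\<dots> = (\<Prod>c\<in>?A. \<psi> (fst c) (\<omega> c) * cnj (\<psi> (fst c) (\<omega> c))) * (\<Prod>c\<in>?B. \<psi> (fst c) (\<omega> c))"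
    by (simp add: prod.distrib)
  also have "\<dots> = (\<Prod>c\<in>?B. \<psi> (fst c) (\<omega> c))" using one by simp
  also have "\<dots> = (\<Prod>c\<in>?A. (if snd c < i' then 1 else \<psi> (fst c) (\<omega> c))) *
       (\<Prod>c\<in>?B. (if snd c < i' then 1 else \<psi> (fst c) (\<omega> c)))"
  proof -
    have "(\<Prod>c\<in>?A. (if snd c < i' then 1 else \<psi> (fst c) (\<omega> c))) = 1" by (rule prod.neutral) auto
    moreover have "(\<Prod>c\<in>?B. (if snd c < i' then 1 else \<psi> (fst c) (\<omega> c))) = (\<Prod>c\<in>?B. \<psi> (fst c) (\<omega> c))"
      by (rule prod.cong) auto
    ultimately show ?thesis by simp
  qed
  also have "\<dots> = (\<Prod>c\<in>?A \<union> ?B. (if snd c < i' then 1 else \<psi> (fst c) (\<omega> c)))"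
    by (subst prod.union_disjoint) auto
  finally show ?thesis using split by simp
qed

lemma cross:
  assumes "valid \<psi>" "i' \<le> i"
  shows "(\<integral>\<omega>. Phi \<psi> i \<omega> * cnj (Phi \<psi> i' \<omega>) \<partial>walk_space r \<alpha>) = phi \<psi> ^ (i - i')"
proof -
  have "(\<integral>\<omega>. Phi \<psi> i \<omega> * cnj (Phi \<psi> i' \<omega>) \<partial>walk_space r \<alpha>) =
     (\<integral>\<omega>. (\<Prod>c\<in>{1..r} \<times> {..<i}. (if snd c < i' then 1 else \<psi> (fst c) (\<omega> c))) \<partial>walk_space r \<alpha>)"
    using cross_pointwise[OF assms] by simp
  also have "\<dots> = (\<Prod>c\<in>{1..r} \<times> {..<i}. of_real (\<alpha> (fst c)) * (if snd c < i' then 1 else \<psi> (fst c) True)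
       + of_real (1 - \<alpha> (fst c)) * (if snd c < i' then 1 else \<psi> (fst c) False))"
    by (rule prod_expect[where f="\<lambda>c b. if snd c < i' then 1 else \<psi> (fst c) b"]) auto
  also have "\<dots> = (\<Prod>c\<in>{1..r} \<times> {i'..<i}. of_real (\<alpha> (fst c)) * \<psi> (fst c) True
       + of_real (1 - \<alpha> (fst c)) * \<psi> (fst c) False)"
  proof -
    have split: "{1..r} \<times> {..<i} = {1..r} \<times> {..<i'} \<union> {1..r} \<times> {i'..<i}" using assms(2) by auto
    show ?thesis unfolding split
      apply (subst prod.union_disjoint)
         apply auto[3]
      apply (subst prod.neutral[where A="{1..r} \<times> {..<i'}"])
       apply (auto simp flip: of_real_add intro!: prod.cong)
      done
  qed
  also have "\<dots> = (\<Prod>j\<in>{1..r}. \<Prod>k\<in>{i'..<i}. of_real (\<alpha> j) * \<psi> j True + of_real (1 - \<alpha> j) * \<psi> j False)"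
    by (subst prod.cartesian_product) (simp add: split_def)
  also have "\<dots> = phi \<psi> ^ (i - i')"
    by (simp add: phi_def prod_power_distrib)
  finally show ?thesis .
qed

lemma integrable_bounded_M:
  fixes f :: "(nat \<times> nat \<Rightarrow> bool) \<Rightarrow> 'b::{banach,second_countable_topology}"
  assumes "f \<in> borel_measurable (walk_space r \<alpha>)" "\<And>\<omega>. norm (f \<omega>) \<le> B"
  shows "integrable (walk_space r \<alpha>) f"
proof -
  interpret prob_space "walk_space r \<alpha>" by (rule prob_space_M)
  show ?thesis by (rule integrable_const_bound[where B=B]) (use assms in auto)
qed

lemma integrable_cross: "valid \<psi> \<Longrightarrow> integrable (walk_space r \<alpha>) (\<lambda>\<omega>. Phi \<psi> i \<omega> * cnj (Phi \<psi> i' \<omega>))"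
  apply (rule integrable_bounded_M[where B=1])
   apply measurable
  apply (auto simp: norm_mult norm_Phi)
  done

lemma norm_cross:
  assumes "valid \<psi>"
  shows "cmod (\<integral>\<omega>. Phi \<psi> i \<omega> * cnj (Phi \<psi> i' \<omega>) \<partial>walk_space r \<alpha>)
          = cmod (phi \<psi>) ^ (if i' \<le> i then i - i' else i' - i)"
proof (cases "i' \<le> i")
  case True then show ?thesis using cross[OF assms True] by (simp add: norm_power)
next
  case False
  have "(\<integral>\<omega>. Phi \<psi> i \<omega> * cnj (Phi \<psi> i' \<omega>) \<partial>walk_space r \<alpha>)
      = cnj (\<integral>\<omega>. Phi \<psi> i' \<omega> * cnj (Phi \<psi> i \<omega>) \<partial>walk_space r \<alpha>)"
    by (simp flip: Bochner_Integration.integral_cnj add: mult.commute)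
  with cross[OF assms, of i i'] False show ?thesis by (simp add: norm_power)
qed

definition S :: "(nat \<Rightarrow> bool \<Rightarrow> complex) \<Rightarrow> nat \<Rightarrow> (nat \<times> nat \<Rightarrow> bool) \<Rightarrow> complex" where
  "S \<psi> n \<omega> = (\<Sum>i\<in>{1..n}. Phi \<psi> i \<omega>)"

lemma meas_S[measurable]: "S \<psi> n \<in> borel_measurable (walk_space r \<alpha>)"
  unfolding S_def by measurable

lemma second_moment:
  assumes v: "valid \<psi>" and lt: "cmod (phi \<psi>) < 1"
  shows "(\<integral>\<omega>. (cmod (S \<psi> n \<omega>))\<^sup>2 \<partial>walk_space r \<alpha>) \<le> real n * (2 / (1 - cmod (phi \<psi>)))"
proof -
  let ?M = "walk_space r \<alpha>" and ?\<rho> = "cmod (phi \<psi>)"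
  have eq: "complex_of_real ((cmod (S \<psi> n \<omega>))\<^sup>2) =
      (\<Sum>i\<in>{1..n}. \<Sum>i'\<in>{1..n}. Phi \<psi> i \<omega> * cnj (Phi \<psi> i' \<omega>))" for \<omega>
    unfolding complex_norm_square S_def cnj_sum by (simp add: sum_product)
  have "complex_of_real (\<integral>\<omega>. (cmod (S \<psi> n \<omega>))\<^sup>2 \<partial>?M) =
      (\<integral>\<omega>. (\<Sum>i\<in>{1..n}. \<Sum>i'\<in>{1..n}. Phi \<psi> i \<omega> * cnj (Phi \<psi> i' \<omega>)) \<partial>?M)"
    by (subst integral_complex_of_real[symmetric]) (simp only: eq)
  also have "\<dots> = (\<Sum>i\<in>{1..n}. \<Sum>i'\<in>{1..n}. (\<integral>\<omega>. Phi \<psi> i \<omega> * cnj (Phi \<psi> i' \<omega>) \<partial>?M))"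
    by (simp add: Bochner_Integration.integral_sum integrable_cross[OF v] Bochner_Integration.integrable_sum)
  finally have e2: "(\<integral>\<omega>. (cmod (S \<psi> n \<omega>))\<^sup>2 \<partial>?M) = Re (\<Sum>i\<in>{1..n}. \<Sum>i'\<in>{1..n}. (\<integral>\<omega>. Phi \<psi> i \<omega> * cnj (Phi \<psi> i' \<omega>) \<partial>?M))"
    by (metis Re_complex_of_real)
  also have "\<dots> \<le> cmod (\<Sum>i\<in>{1..n}. \<Sum>i'\<in>{1..n}. (\<integral>\<omega>. Phi \<psi> i \<omega> * cnj (Phi \<psi> i' \<omega>) \<partial>?M))"
    by (rule complex_Re_le_cmod)
  also have "\<dots> \<le> (\<Sum>i\<in>{1..n}. \<Sum>i'\<in>{1..n}. cmod (\<integral>\<omega>. Phi \<psi> i \<omega> * cnj (Phi \<psi> i' \<omega>) \<partial>?M))"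
    by (rule order.trans[OF norm_sum sum_mono]) (rule norm_sum)
  also have "\<dots> = (\<Sum>i\<in>{1..n}. \<Sum>i'\<in>{1..n}. ?\<rho> ^ (if i' \<le> i then i - i' else i' - i))"
    by (simp add: norm_cross[OF v])
  also have "\<dots> \<le> (\<Sum>i\<in>{1..n}. 2 / (1 - ?\<rho>))"
    by (rule sum_mono, rule geo_dist) (use lt in auto)
  also have "\<dots> = real n * (2 / (1 - ?\<rho>))" by simp
  finally show ?thesis .
qed

lemma summable_inv_sq: "summable (\<lambda>m. 1 / real (Suc m) ^ 2)"
  using inverse_power_summable[of 2] by (subst summable_Suc_iff) (simp add: inverse_eq_divide)

lemma AE_small_q:
  assumes v: "valid \<psi>" and lt: "cmod (phi \<psi>) < 1"
  shows "AE \<omega> in walk_space r \<alpha>. eventually (\<lambda>m. cmod (S \<psi> ((Suc m)\<^sup>2) \<omega>) < real ((Suc m)\<^sup>2) / real (Suc q)) sequentially"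
proof -
  let ?M = "walk_space r \<alpha>" and ?C = "2 / (1 - cmod (phi \<psi>))"
  interpret prob_space ?M by (rule prob_space_M)
  define c where "c m = real ((Suc m)\<^sup>2) / real (Suc q)" for m
  define A where "A m = {\<omega>\<in>space ?M. (c m)\<^sup>2 \<le> (cmod (S \<psi> ((Suc m)\<^sup>2) \<omega>))\<^sup>2}" for m
  have Ameas[measurable]: "A m \<in> sets ?M" for m unfolding A_def by measurable
  have cpos: "c m > 0" for m unfolding c_def by simp
  have intS: "integrable ?M (\<lambda>\<omega>. (cmod (S \<psi> k \<omega>))\<^sup>2)" for k
  proof (rule integrable_bounded_M[where B="(real k)\<^sup>2"])
    fix \<omega>
    have "cmod (S \<psi> k \<omega>) \<le> (\<Sum>i\<in>{1..k}. cmod (Phi \<psi> i \<omega>))" unfolding S_def by (rule norm_sum)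
    also have "\<dots> = real k" by (simp add: norm_Phi[OF v])
    finally show "norm ((cmod (S \<psi> k \<omega>))\<^sup>2) \<le> (real k)\<^sup>2" by (simp add: power_mono)
  qed measurable
  have bound: "measure ?M (A m) \<le> ?C * real (Suc q) ^ 2 * (1 / real (Suc m) ^ 2)" for m
  proof -
    have "measure ?M (A m) \<le> (\<integral>\<omega>. (cmod (S \<psi> ((Suc m)\<^sup>2) \<omega>))\<^sup>2 \<partial>?M) / (c m)\<^sup>2"
      unfolding A_def by (rule integral_Markov_inequality_measure[OF intS, where A="space ?M"]) (use cpos[of m] in auto)
    also have "\<dots> \<le> (real ((Suc m)\<^sup>2) * ?C) / (c m)\<^sup>2"
      by (intro divide_right_mono) (use second_moment[OF v lt, of "(Suc m)\<^sup>2"] in \<open>simp_all only: mult.commute zero_le_power2\<close>)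
    also have "\<dots> = ?C * real (Suc q) ^ 2 * (1 / real (Suc m) ^ 2)"
    proof -
      have h: "(x\<^sup>2 * C) / (x\<^sup>2 / y)\<^sup>2 = C * y ^ 2 * (1 / x ^ 2)" if "x > 0" "y > 0" for x y C :: real
        using that by (simp add: field_simps power2_eq_square)
      show ?thesis unfolding c_def of_nat_power using h[of "real (Suc m)" "real (Suc q)" ?C] by simp
    qed
    finally show ?thesis .
  qed
  have summ: "summable (\<lambda>m. measure ?M (A m))"
    by (rule summable_comparison_test'[OF summable_mult[OF summable_inv_sq, of "?C * real (Suc q) ^ 2"]])
       (use bound in auto)
  have "AE \<omega> in ?M. eventually (\<lambda>m. \<omega> \<in> space ?M - A m) sequentially"
    by (rule borel_cantelli_AE1) (use summ in \<open>auto simp: emeasure_eq_measure\<close>)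
  then show ?thesis
  proof (rule eventually_mono)
    fix \<omega> assume "eventually (\<lambda>m. \<omega> \<in> space ?M - A m) sequentially"
    then show "eventually (\<lambda>m. cmod (S \<psi> ((Suc m)\<^sup>2) \<omega>) < real ((Suc m)\<^sup>2) / real (Suc q)) sequentially"
    proof (rule eventually_mono)
      fix m assume "\<omega> \<in> space ?M - A m"
      then have "\<not> (c m)\<^sup>2 \<le> (cmod (S \<psi> ((Suc m)\<^sup>2) \<omega>))\<^sup>2" unfolding A_def by auto
      then have "cmod (S \<psi> ((Suc m)\<^sup>2) \<omega>) < c m"
        using cpos[of m] by (metis norm_ge_zero power_mono linorder_not_le less_imp_le)
      then show "cmod (S \<psi> ((Suc m)\<^sup>2) \<omega>) < real ((Suc m)\<^sup>2) / real (Suc q)" by (simp add: c_def)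
    qed
  qed
qed

definition conv_avg :: "(nat \<Rightarrow> (nat \<times> nat \<Rightarrow> bool) \<Rightarrow> complex) \<Rightarrow> bool" where
  "conv_avg W \<longleftrightarrow> (AE \<omega> in walk_space r \<alpha>. convergent (\<lambda>n. (\<Sum>i\<in>{1..n}. W i \<omega>) / of_nat n))"

lemma conv_small:
  assumes v: "valid \<psi>" and lt: "cmod (phi \<psi>) < 1"
  shows "conv_avg (Phi \<psi>)"
proof -
  have "AE \<omega> in walk_space r \<alpha>. \<forall>q. eventually (\<lambda>m. cmod (S \<psi> ((Suc m)\<^sup>2) \<omega>) < real ((Suc m)\<^sup>2) / real (Suc q)) sequentially"
    unfolding AE_all_countable using AE_small_q[OF v lt] by blast
  then show ?thesis unfolding conv_avg_def
  proof (rule eventually_mono)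
    fix \<omega> assume H: "\<forall>q. eventually (\<lambda>m. cmod (S \<psi> ((Suc m)\<^sup>2) \<omega>) < real ((Suc m)\<^sup>2) / real (Suc q)) sequentially"
    have "(\<lambda>n. (\<Sum>i\<in>{1..n}. Phi \<psi> i \<omega>) / of_nat n) \<longlonglongrightarrow> 0"
      by (rule interp) (use H norm_Phi[OF v] in \<open>auto simp: S_def\<close>)
    then show "convergent (\<lambda>n. (\<Sum>i\<in>{1..n}. Phi \<psi> i \<omega>) / of_nat n)" by (rule convergentI)
  qed
qed

lemma conv_big:
  assumes v: "valid \<psi>" and ge: "\<not> cmod (phi \<psi>) < 1"
  shows "conv_avg (Phi \<psi>)"
proof -
  define f where "f j = of_real (\<alpha> j) * \<psi> j True + of_real (1 - \<alpha> j) * \<psi> j False" for j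
  have fle: "cmod (f j) \<le> 1" if j: "j \<in> {1..r}" for j
  proof -
    have "cmod (f j) \<le> cmod (of_real (\<alpha> j) * \<psi> j True) + cmod (of_real (1 - \<alpha> j) * \<psi> j False)"
      unfolding f_def by (rule norm_triangle_ineq)
    also have "\<dots> = \<alpha> j + (1 - \<alpha> j)"
      using v j \<alpha>_pos[OF j] \<alpha>_lt1[OF j] unfolding valid_def by (simp add: norm_mult del: of_real_diff)
    finally show ?thesis by simp
  qed
  have prodge: "(\<Prod>j\<in>{1..r}. cmod (f j)) \<ge> 1"
    using ge unfolding phi_def f_def by (simp add: prod_norm)
  have eqTF: "\<psi> j True = \<psi> j False" if j: "j \<in> {1..r}" for j
  proof (rule convex_unit_eq[OF \<alpha>_pos[OF j] \<alpha>_lt1[OF j]])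
    show "cmod (\<psi> j True) = 1" "cmod (\<psi> j False) = 1" using v j unfolding valid_def by auto
    show "cmod (of_real (\<alpha> j) * \<psi> j True + of_real (1 - \<alpha> j) * \<psi> j False) = 1"
      using prod_eq1_each[of "{1..r}" "\<lambda>j. cmod (f j)", OF _ _ _ prodge j] fle unfolding f_def by auto
  qed
  define L where "L = (\<Prod>j\<in>{1..r}. \<psi> j True)"
  have PhiL: "Phi \<psi> i \<omega> = L ^ i" for i \<omega>
  proof -
    have "Phi \<psi> i \<omega> = (\<Prod>c\<in>{1..r} \<times> {..<i}. \<psi> (fst c) True)"
      unfolding Phi_def
    proof (rule prod.cong[OF refl])
      fix c assume "c \<in> {1..r} \<times> {..<i}"
      then have "fst c \<in> {1..r}" by auto
      then show "\<psi> (fst c) (\<omega> c) = \<psi> (fst c) True" using eqTF[of "fst c"] by (cases "\<omega> c") auto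
    qed
    also have "\<dots> = (\<Prod>j\<in>{1..r}. \<Prod>k\<in>{..<i}. \<psi> j True)"
      by (subst prod.cartesian_product) (simp add: split_def)
    also have "\<dots> = L ^ i" by (simp add: L_def prod_power_distrib)
    finally show ?thesis .
  qed
  have L1: "cmod L = 1" using v unfolding L_def valid_def by (simp flip: prod_norm)
  show ?thesis unfolding conv_avg_def PhiL
    using geom_avg_conv[OF L1] by simp
qed

lemma conv_Phi: "valid \<psi> \<Longrightarrow> conv_avg (Phi \<psi>)"
  using conv_small conv_big by blast

inductive Tclass :: "(nat \<Rightarrow> (nat \<times> nat \<Rightarrow> bool) \<Rightarrow> complex) \<Rightarrow> bool" where
  T_basic: "valid \<psi> \<Longrightarrow> Tclass (Phi \<psi>)"
| T_add: "Tclass W \<Longrightarrow> Tclass V \<Longrightarrow> Tclass (\<lambda>i \<omega>. W i \<omega> + V i \<omega>)"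
| T_smult: "Tclass W \<Longrightarrow> Tclass (\<lambda>i \<omega>. c * W i \<omega>)"

lemma conv_add: assumes "conv_avg W" "conv_avg V" shows "conv_avg (\<lambda>i \<omega>. W i \<omega> + V i \<omega>)"
  using assms unfolding conv_avg_def
  by eventually_elim (simp add: sum.distrib add_divide_distrib convergent_add)

lemma conv_smult: assumes "conv_avg W" shows "conv_avg (\<lambda>i \<omega>. c * W i \<omega>)"
  using assms unfolding conv_avg_def
proof eventually_elim
  case (elim \<omega>)
  then obtain L where "(\<lambda>n. (\<Sum>i\<in>{1..n}. W i \<omega>) / of_nat n) \<longlonglongrightarrow> L" by (auto simp: convergent_def)
  then have "(\<lambda>n. c * ((\<Sum>i\<in>{1..n}. W i \<omega>) / of_nat n)) \<longlonglongrightarrow> c * L" by (intro tendsto_intros)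
  then show ?case by (auto simp: convergent_def sum_distrib_left[symmetric] intro!: exI[of _ "c * L"])
qed

lemma Tclass_conv: "Tclass W \<Longrightarrow> conv_avg W"
  by (induction rule: Tclass.induct) (auto intro: conv_Phi conv_add conv_smult)

lemma valid_one: "valid (\<lambda>_ _. 1)" by (simp add: valid_def)

lemma Phi_one: "Phi (\<lambda>_ _. 1) i \<omega> = 1" by (simp add: Phi_def)

lemma T_const: "Tclass (\<lambda>i \<omega>. c)"
  using T_smult[OF T_basic[OF valid_one], of c] by (simp add: Phi_one)

lemma Phi_mult: "Phi \<psi> i \<omega> * Phi \<psi>' i \<omega> = Phi (\<lambda>j b. \<psi> j b * \<psi>' j b) i \<omega>"
  unfolding Phi_def by (simp add: prod.distrib)

lemma valid_mult: "valid \<psi> \<Longrightarrow> valid \<psi>' \<Longrightarrow> valid (\<lambda>j b. \<psi> j b * \<psi>' j b)"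
  by (simp add: valid_def norm_mult)

lemma T_mult_basic: "Tclass V \<Longrightarrow> valid \<psi> \<Longrightarrow> Tclass (\<lambda>i \<omega>. Phi \<psi> i \<omega> * V i \<omega>)"
proof (induction rule: Tclass.induct)
  case (T_basic \<psi>')
  then show ?case unfolding Phi_mult by (intro Tclass.T_basic valid_mult)
next
  case (T_add W V)
  then show ?case using Tclass.T_add[OF T_add.IH] by (simp add: distrib_left)
next
  case (T_smult W c)
  then show ?case using Tclass.T_smult[OF T_smult.IH, of c] by (simp add: ac_simps)
qed

lemma T_mult: "Tclass W \<Longrightarrow> Tclass V \<Longrightarrow> Tclass (\<lambda>i \<omega>. W i \<omega> * V i \<omega>)"
proof (induction rule: Tclass.induct)
  case (T_basic \<psi>)
  then show ?case by (intro T_mult_basic)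
next
  case (T_add W V')
  then show ?case using Tclass.T_add[OF T_add.IH] by (simp add: distrib_right)
next
  case (T_smult W c)
  then show ?case using Tclass.T_smult[OF T_smult.IH, of c] by (simp add: ac_simps)
qed

lemma T_sum: "finite A \<Longrightarrow> (\<And>x. x \<in> A \<Longrightarrow> Tclass (F x)) \<Longrightarrow> Tclass (\<lambda>i \<omega>. \<Sum>x\<in>A. F x i \<omega>)"
proof (induction A rule: finite_induct)
  case empty then show ?case using T_const[of 0] by simp
next
  case (insert x A)
  then show ?case using T_add[of "F x" "\<lambda>i \<omega>. \<Sum>x\<in>A. F x i \<omega>"] by simp
qed

lemma T_prod: "finite A \<Longrightarrow> (\<And>x. x \<in> A \<Longrightarrow> Tclass (F x)) \<Longrightarrow> Tclass (\<lambda>i \<omega>. \<Prod>x\<in>A. F x i \<omega>)"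
proof (induction A rule: finite_induct)
  case empty then show ?case using T_const[of 1] by simp
next
  case (insert x A)
  then show ?case using T_mult[of "F x" "\<lambda>i \<omega>. \<Prod>x\<in>A. F x i \<omega>"] by simp
qed

definition Xc :: "nat \<Rightarrow> nat \<Rightarrow> (nat \<times> nat \<Rightarrow> bool) \<Rightarrow> nat" where
  "Xc j i \<omega> = card {k. k < i \<and> \<omega> (j, k)}"
definition Yc :: "nat \<Rightarrow> nat \<Rightarrow> (nat \<times> nat \<Rightarrow> bool) \<Rightarrow> nat" where
  "Yc j i \<omega> = card {k. k < i \<and> \<not> \<omega> (j, k)}"

lemma Phi_pow_gen:
  assumes j: "j \<in> {1..r}"
  shows "Phi (\<lambda>j' b. if j' = j \<and> b = b0 then z else 1) i \<omega> = z ^ card {k. k < i \<and> \<omega> (j, k) = b0}"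
proof -
  have "Phi (\<lambda>j' b. if j' = j \<and> b = b0 then z else 1) i \<omega>
      = (\<Prod>c\<in>{1..r} \<times> {..<i}. if fst c = j \<and> \<omega> c = b0 then z else 1)" by (simp add: Phi_def)
  also have "\<dots> = (\<Prod>c\<in>({1..r} \<times> {..<i}) \<inter> {c. fst c = j \<and> \<omega> c = b0}. z)"
    by (subst prod.If_cases) auto
  also have "\<dots> = z ^ card (({1..r} \<times> {..<i}) \<inter> {c. fst c = j \<and> \<omega> c = b0})" by simp
  also have "({1..r} \<times> {..<i}) \<inter> {c. fst c = j \<and> \<omega> c = b0} = (\<lambda>k. (j, k)) ` {k. k < i \<and> \<omega> (j, k) = b0}"
    using j by auto
  also have "card \<dots> = card {k. k < i \<and> \<omega> (j, k) = b0}" by (rule card_image) (auto simp: inj_on_def)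
  finally show ?thesis .
qed

definition zr :: "nat \<Rightarrow> complex" where "zr m = exp (2 * of_real pi * \<i> / of_nat m)"

lemma zr_pow: "zr m ^ x = exp (2 * of_real pi * \<i> * of_nat x / of_nat m)"
  unfolding zr_def by (simp flip: exp_of_nat_mult add: algebra_simps)

lemma norm_zr_pow: "cmod (zr m ^ t) = 1"
  unfolding zr_pow by (simp add: norm_exp_eq_Re)

lemma root_sum:
  assumes m: "m \<ge> 1"
  shows "(\<Sum>t<m. (zr m ^ t) ^ x) = (if m dvd x then of_nat m else 0)"
proof -
  let ?w = "zr m ^ x"
  have w1: "?w = 1 \<longleftrightarrow> m dvd x" unfolding zr_pow using complex_root_unity_eq_1[OF m] by simp
  have wm: "?w ^ m = 1"
  proof -
    have "?w ^ m = zr m ^ (m * x)" by (simp add: power_mult[symmetric] mult.commute)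
    also have "\<dots> = exp (2 * of_real pi * \<i> * of_nat (m * x) / of_nat m)" by (rule zr_pow)
    also have "\<dots> = 1" using complex_root_unity_eq_1[OF m, of "m * x"] by simp
    finally show ?thesis .
  qed
  have "(\<Sum>t<m. (zr m ^ t) ^ x) = (\<Sum>t<m. ?w ^ t)" by (simp add: power_mult[symmetric] mult.commute)
  also have "\<dots> = (if m dvd x then of_nat m else 0)" using w1 wm by (simp add: sum_gp_strict)
  finally show ?thesis .
qed

lemma T_ind_gen:
  assumes j: "j \<in> {1..r}" and m: "m \<ge> 1"
  shows "Tclass (\<lambda>i \<omega>. of_real (if m dvd card {k. k < i \<and> \<omega> (j, k) = b0} then 1 else 0))"
proof -
  have valid: "valid (\<lambda>j' b. if j' = j \<and> b = b0 then zr m ^ t else 1)" for t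
    by (simp add: valid_def norm_zr_pow)
  have T: "Tclass (\<lambda>i \<omega>. (1 / of_nat m) * (\<Sum>t<m. Phi (\<lambda>j' b. if j' = j \<and> b = b0 then zr m ^ t else 1) i \<omega>))"
    by (intro T_smult T_sum T_basic valid) simp
  have eq: "(\<lambda>i \<omega>. (1 / of_nat m) * (\<Sum>t<m. Phi (\<lambda>j' b. if j' = j \<and> b = b0 then zr m ^ t else 1) i \<omega>))
     = (\<lambda>i \<omega>. of_real (if m dvd card {k. k < i \<and> \<omega> (j, k) = b0} then 1 else 0))"
    using m by (intro ext) (simp add: Phi_pow_gen[OF j] root_sum)
  show ?thesis using T unfolding eq .
qed

lemma T_indX: "j \<in> {1..r} \<Longrightarrow> m \<ge> 1 \<Longrightarrow> Tclass (\<lambda>i \<omega>. of_real (if m dvd Xc j i \<omega> then 1 else 0))"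
  using T_ind_gen[of j m True] by (simp add: Xc_def)

lemma T_indY: "j \<in> {1..r} \<Longrightarrow> m \<ge> 1 \<Longrightarrow> Tclass (\<lambda>i \<omega>. of_real (if m dvd Yc j i \<omega> then 1 else 0))"
  using T_ind_gen[of j m False] by (simp add: Yc_def)

end


context walks
begin

lemma sets_coord:
  assumes c: "c \<in> Ix"
  shows "{\<omega>\<in>space (walk_space r \<alpha>). P (\<omega> c)} \<in> sets (walk_space r \<alpha>)"
proof -
  have m: "(\<lambda>\<omega>. \<omega> c) \<in> measurable (walk_space r \<alpha>) (Bm c)"
    unfolding walk_space_def by (rule measurable_component_singleton[OF c])
  have "{b. P b} \<in> sets (Bm c)" by simp
  from measurable_sets[OF m this] show ?thesis by (simp add: vimage_def Int_def conj_commute)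
qed

lemma AE_hit:
  assumes j: "j \<in> {1..r}"
  shows "AE \<omega> in walk_space r \<alpha>. \<exists>k. \<omega> (j, k) = b0"
proof -
  let ?M = "walk_space r \<alpha>"
  interpret prob_space ?M by (rule prob_space_M)
  define q where "q = (if b0 then 1 - \<alpha> j else \<alpha> j)"
  have q01: "0 \<le> q" "q < 1" using \<alpha>_pos[OF j] \<alpha>_lt1[OF j] unfolding q_def by auto
  define NK where "NK K = {\<omega>\<in>space ?M. \<forall>k<K. \<omega> (j, k) \<noteq> b0}" for K
  have NKs: "NK K \<in> sets ?M" for K
  proof (induction K)
    case 0 then show ?case by (simp add: NK_def)
  next
    case (Suc K)
    have "NK (Suc K) = NK K \<inter> {\<omega>\<in>space ?M. \<omega> (j, K) \<noteq> b0}"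
      unfolding NK_def by (auto simp: less_Suc_eq)
    then show ?case using Suc sets_coord[of "(j, K)" "\<lambda>b. b \<noteq> b0"] j by auto
  qed
  have mNK: "measure ?M (NK K) = q ^ K" for K
  proof -
    have "complex_of_real (measure ?M (NK K)) = (\<integral>\<omega>. complex_of_real (indicator (NK K) \<omega>) \<partial>?M)"
      using NKs[of K] by (simp add: Int_absorb2 sets.sets_into_space)
    also have "\<dots> = (\<integral>\<omega>. (\<Prod>c\<in>{j} \<times> {..<K}. (if \<omega> c = b0 then 0 else 1)) \<partial>?M)"
    proof (rule Bochner_Integration.integral_cong[OF refl])
      fix \<omega> assume "\<omega> \<in> space ?M"
      then show "complex_of_real (indicator (NK K) \<omega>) = (\<Prod>c\<in>{j} \<times> {..<K}. (if \<omega> c = b0 then 0 else 1))"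
        unfolding NK_def indicator_def by (auto simp: prod_zero_iff intro!: prod.neutral)
    qed
    also have "\<dots> = (\<Prod>c\<in>{j} \<times> {..<K}. of_real (\<alpha> (fst c)) * (if True = b0 then 0 else 1) + of_real (1 - \<alpha> (fst c)) * (if False = b0 then 0 else 1))"
      by (rule prod_expect) (use j in auto)
    also have "\<dots> = (\<Prod>c\<in>{j} \<times> {..<K}. complex_of_real q)"
      by (rule prod.cong[OF refl]) (auto simp: q_def)
    also have "\<dots> = complex_of_real (q ^ K)" by (simp add: card_cartesian_product)
    finally show ?thesis by (simp only: of_real_eq_iff)
  qed
  define N where "N = {\<omega>\<in>space ?M. \<forall>k. \<omega> (j, k) \<noteq> b0}"
  have NeqI: "N = (\<Inter>K. NK K)" unfolding N_def NK_def by auto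
  have Ns: "N \<in> sets ?M" unfolding NeqI using NKs by auto
  have "measure ?M N \<le> q ^ K" for K
  proof -
    have "N \<subseteq> NK K" unfolding NeqI by auto
    then have "measure ?M N \<le> measure ?M (NK K)" by (intro finite_measure_mono NKs)
    then show ?thesis using mNK by simp
  qed
  moreover have "(\<lambda>K. q ^ K) \<longlonglongrightarrow> 0" using q01 by (intro LIMSEQ_power_zero) auto
  ultimately have "measure ?M N \<le> 0" by (intro LIMSEQ_le_const[of "\<lambda>K. q ^ K"]) auto
  then have "emeasure ?M N = 0" using Ns by (simp add: emeasure_eq_measure measure_nonneg antisym)
  then have "N \<in> null_sets ?M" using Ns by auto
  then show ?thesis by (rule AE_I') (auto simp: N_def)
qed

definition offaxis :: "(nat \<times> nat \<Rightarrow> bool) \<Rightarrow> nat \<Rightarrow> bool" where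
  "offaxis \<omega> i \<longleftrightarrow> (\<forall>j\<in>{1..r}. Xc j i \<omega> \<ge> 1 \<and> Yc j i \<omega> \<ge> 1)"

lemma AE_offaxis: "AE \<omega> in walk_space r \<alpha>. \<exists>T. \<forall>i\<ge>T. offaxis \<omega> i"
proof -
  have "AE \<omega> in walk_space r \<alpha>. \<forall>j\<in>{1..r}. (\<exists>k. \<omega> (j, k) = True) \<and> (\<exists>k. \<omega> (j, k) = False)"
    by (intro AE_finite_allI AE_conjI AE_hit) auto
  then show ?thesis
  proof (rule eventually_mono)
    fix \<omega> :: "nat \<times> nat \<Rightarrow> bool" assume H: "\<forall>j\<in>{1..r}. (\<exists>k. \<omega> (j, k) = True) \<and> (\<exists>k. \<omega> (j, k) = False)"
    define kT where "kT j = (SOME k::nat. \<omega> (j, k) = True)" for j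
    define kF where "kF j = (SOME k::nat. \<omega> (j, k) = False)" for j
    have kT: "\<omega> (j, kT j)" and kF: "\<not> \<omega> (j, kF j)" if "j \<in> {1..r}" for j
      using H that unfolding kT_def kF_def by (metis (mono_tags) someI_ex)+
    define T where "T = Suc (\<Sum>j\<in>{1..r}. kT j + kF j)"
    have "offaxis \<omega> i" if i: "i \<ge> T" for i
      unfolding offaxis_def
    proof
      fix j assume j: "j \<in> {1..r}"
      have le: "kT j + kF j \<le> (\<Sum>j\<in>{1..r}. kT j + kF j)" by (rule member_le_sum) (use j in auto)
      have "kT j < i" "kF j < i" using le i unfolding T_def by auto
      then have "kT j \<in> {k. k < i \<and> \<omega> (j, k)}" "kF j \<in> {k. k < i \<and> \<not> \<omega> (j, k)}" using kT[OF j] kF[OF j] by auto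
      moreover have "finite {k. k < i \<and> \<omega> (j, k)}" "finite {k. k < i \<and> \<not> \<omega> (j, k)}" by auto
      ultimately have "card {k. k < i \<and> \<omega> (j, k)} > 0" "card {k. k < i \<and> \<not> \<omega> (j, k)} > 0"
        by (auto simp: card_gt_0_iff)
      then show "Xc j i \<omega> \<ge> 1 \<and> Yc j i \<omega> \<ge> 1" unfolding Xc_def Yc_def by auto
    qed
    then show "\<exists>T. \<forall>i\<ge>T. offaxis \<omega> i" by blast
  qed
qed

definition Yv :: "nat \<Rightarrow> nat \<Rightarrow> nat \<Rightarrow> (nat \<times> nat \<Rightarrow> bool) \<Rightarrow> real" where
  "Yv b1 b2 i \<omega> = (if \<forall>j\<in>{1..r}. b_visible (b1, b2) (walk_pos \<omega> j i) then 1 else 0)"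

definition badj :: "nat \<Rightarrow> nat \<Rightarrow> nat \<Rightarrow> nat \<Rightarrow> nat \<Rightarrow> (nat \<times> nat \<Rightarrow> bool) \<Rightarrow> bool" where
  "badj b1 b2 j p i \<omega> \<longleftrightarrow> p ^ b1 dvd Xc j i \<omega> \<and> p ^ b2 dvd Yc j i \<omega>"

definition YN :: "nat \<Rightarrow> nat \<Rightarrow> nat \<Rightarrow> nat \<Rightarrow> (nat \<times> nat \<Rightarrow> bool) \<Rightarrow> real" where
  "YN b1 b2 N i \<omega> = (\<Prod>j\<in>{1..r}. \<Prod>p\<in>{p. prime p \<and> p \<le> N}. if badj b1 b2 j p i \<omega> then 0 else 1)"

lemma walk_pos_eq: "walk_pos \<omega> j i = (int (Xc j i \<omega>), int (Yc j i \<omega>))"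
  by (simp add: walk_pos_def Xc_def Yc_def)

lemma XY_sum: "Xc j i \<omega> + Yc j i \<omega> = i"
proof -
  have "{k. k < i \<and> \<omega> (j, k)} \<union> {k. k < i \<and> \<not> \<omega> (j, k)} = {..<i}" by auto
  moreover have "card ({k. k < i \<and> \<omega> (j, k)} \<union> {k. k < i \<and> \<not> \<omega> (j, k)}) =
      card {k. k < i \<and> \<omega> (j, k)} + card {k. k < i \<and> \<not> \<omega> (j, k)}"
    by (rule card_Un_disjoint) auto
  ultimately show ?thesis unfolding Xc_def Yc_def by simp
qed

lemma finite_primes_le: "finite {p::nat. prime p \<and> p \<le> N}" by auto

lemma T_YN: "Tclass (\<lambda>i \<omega>. complex_of_real (YN b1 b2 N i \<omega>))"
proof -
  have fac: "Tclass (\<lambda>i \<omega>. complex_of_real (if badj b1 b2 j p i \<omega> then 0 else 1))"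
    if j: "j \<in> {1..r}" and p: "p \<in> {p. prime p \<and> p \<le> N}" for j p
  proof -
    have p1: "p ^ b1 \<ge> 1" "p ^ b2 \<ge> 1" using p by (auto simp: prime_gt_0_nat Suc_le_eq)
    have T: "Tclass (\<lambda>i \<omega>. 1 + (-1) * (complex_of_real (if p ^ b1 dvd Xc j i \<omega> then 1 else 0)
          * complex_of_real (if p ^ b2 dvd Yc j i \<omega> then 1 else 0)))"
      by (intro T_add T_const T_smult T_mult T_indX T_indY j p1)
    have eq: "(\<lambda>i \<omega>. 1 + (-1) * (complex_of_real (if p ^ b1 dvd Xc j i \<omega> then 1 else 0)
          * complex_of_real (if p ^ b2 dvd Yc j i \<omega> then 1 else 0)))
        = (\<lambda>i \<omega>. complex_of_real (if badj b1 b2 j p i \<omega> then 0 else 1))"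
      by (intro ext) (simp add: badj_def)
    show ?thesis using T unfolding eq .
  qed
  have "Tclass (\<lambda>i \<omega>. \<Prod>j\<in>{1..r}. \<Prod>p\<in>{p. prime p \<and> p \<le> N}. complex_of_real (if badj b1 b2 j p i \<omega> then 0 else 1))"
    by (intro T_prod fac finite_primes_le) auto
  then show ?thesis unfolding YN_def by (simp only: of_real_prod)
qed

lemma conv_YN: "AE \<omega> in walk_space r \<alpha>. convergent (\<lambda>n. (\<Sum>i\<in>{1..n}. YN b1 b2 N i \<omega>) / real n)"
  using Tclass_conv[OF T_YN[of b1 b2 N]] unfolding conv_avg_def
proof (rule eventually_mono)
  fix \<omega> assume "convergent (\<lambda>n. (\<Sum>i\<in>{1..n}. complex_of_real (YN b1 b2 N i \<omega>)) / of_nat n)"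
  then obtain L where "(\<lambda>n. (\<Sum>i\<in>{1..n}. complex_of_real (YN b1 b2 N i \<omega>)) / of_nat n) \<longlonglongrightarrow> L"
    by (auto simp: convergent_def)
  then have "(\<lambda>n. Re ((\<Sum>i\<in>{1..n}. complex_of_real (YN b1 b2 N i \<omega>)) / of_nat n)) \<longlonglongrightarrow> Re L"
    by (rule tendsto_Re)
  moreover have "Re ((\<Sum>i\<in>{1..n}. complex_of_real (YN b1 b2 N i \<omega>)) / of_nat n) = (\<Sum>i\<in>{1..n}. YN b1 b2 N i \<omega>) / real n" for n
    by (simp flip: of_real_sum)
  ultimately show "convergent (\<lambda>n. (\<Sum>i\<in>{1..n}. YN b1 b2 N i \<omega>) / real n)"
    by (auto simp: convergent_def)
qed

lemma prod_if01: "finite A \<Longrightarrow> (\<Prod>x\<in>A. if P x then 0 else (1::real)) = (if \<forall>x\<in>A. \<not> P x then 1 else 0)"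
  by (auto simp: prod_zero_iff intro: prod.neutral)

lemma YN_val: "YN b1 b2 N i \<omega> = (if \<forall>j\<in>{1..r}. \<forall>p\<in>{p. prime p \<and> p \<le> N}. \<not> badj b1 b2 j p i \<omega> then 1 else 0)"
proof -
  have "YN b1 b2 N i \<omega> = (\<Prod>j\<in>{1..r}. if \<forall>p\<in>{p. prime p \<and> p \<le> N}. \<not> badj b1 b2 j p i \<omega> then 1 else 0)"
    unfolding YN_def by (simp only: prod_if01[OF finite_primes_le])
  also have "\<dots> = (\<Prod>j\<in>{1..r}. if \<not> (\<forall>p\<in>{p. prime p \<and> p \<le> N}. \<not> badj b1 b2 j p i \<omega>) then 0 else 1)"
    by (rule prod.cong) auto
  also have "\<dots> = (if \<forall>j\<in>{1..r}. \<forall>p\<in>{p. prime p \<and> p \<le> N}. \<not> badj b1 b2 j p i \<omega> then 1 else 0)"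
    by (subst prod_if01) auto
  finally show ?thesis .
qed

lemma Yv_val:
  assumes cop: "coprime b1 b2" and b1: "b1 \<ge> 1" and b2: "b2 \<ge> 1" and off: "offaxis \<omega> i"
  shows "Yv b1 b2 i \<omega> = (if \<forall>j\<in>{1..r}. \<forall>p. prime p \<longrightarrow> \<not> badj b1 b2 j p i \<omega> then 1 else 0)"
proof -
  have "b_visible (b1, b2) (walk_pos \<omega> j i) \<longleftrightarrow> (\<forall>p. prime p \<longrightarrow> \<not> badj b1 b2 j p i \<omega>)" if j: "j \<in> {1..r}" for j
    unfolding walk_pos_eq badj_def using vis_iff[OF cop b1 b2, of "Xc j i \<omega>" "Yc j i \<omega>"] off j
    unfolding offaxis_def by auto
  then show ?thesis unfolding Yv_def by auto
qed

lemma bad_dvd_i: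
  assumes "badj b1 b2 j p i \<omega>"
  shows "p ^ min b1 b2 dvd i"
proof -
  have "p ^ min b1 b2 dvd p ^ b1" "p ^ min b1 b2 dvd p ^ b2" by (simp_all add: le_imp_power_dvd)
  then have "p ^ min b1 b2 dvd Xc j i \<omega>" "p ^ min b1 b2 dvd Yc j i \<omega>"
    using assms unfolding badj_def by (auto intro: dvd_trans)
  then have "p ^ min b1 b2 dvd Xc j i \<omega> + Yc j i \<omega>" by (rule dvd_add)
  then show ?thesis by (simp add: XY_sum)
qed

lemma diff_bound:
  assumes cop: "coprime b1 b2" and b1: "b1 \<ge> 1" and b2: "b2 \<ge> 1" and off: "offaxis \<omega> i"
  shows "\<bar>Yv b1 b2 i \<omega> - YN b1 b2 N i \<omega>\<bar> \<le> (if \<exists>p. prime p \<and> N < p \<and> p ^ min b1 b2 dvd i then 1 else 0)"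
proof (cases "\<forall>j\<in>{1..r}. \<forall>p. prime p \<longrightarrow> \<not> badj b1 b2 j p i \<omega>")
  case True
  then show ?thesis unfolding Yv_val[OF cop b1 b2 off] YN_val by auto
next
  case False
  then obtain j p where j: "j \<in> {1..r}" and p: "prime p" and bad: "badj b1 b2 j p i \<omega>" by blast
  have Yv0: "Yv b1 b2 i \<omega> = 0" unfolding Yv_val[OF cop b1 b2 off] using False by auto
  show ?thesis
  proof (cases "p \<le> N")
    case True
    then have "YN b1 b2 N i \<omega> = 0" unfolding YN_val using j p bad by auto
    then show ?thesis using Yv0 by simp
  next
    case False
    then have "\<exists>p. prime p \<and> N < p \<and> p ^ min b1 b2 dvd i" using p bad_dvd_i[OF bad] by auto
    then show ?thesis using Yv0 unfolding YN_val by auto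
  qed
qed

lemma kfree_vis:
  assumes cop: "coprime b1 b2" and b1: "b1 \<ge> 1" and b2: "b2 \<ge> 1" and off: "offaxis \<omega> i"
    and kf: "kfree (min b1 b2) i"
  shows "Yv b1 b2 i \<omega> = 1"
proof -
  have "\<forall>j\<in>{1..r}. \<forall>p. prime p \<longrightarrow> \<not> badj b1 b2 j p i \<omega>"
    using kf bad_dvd_i[of b1 b2 _ _ i \<omega>] unfolding kfree_def by blast
  then show ?thesis unfolding Yv_val[OF cop b1 b2 off] by simp
qed

lemma Yv01: "0 \<le> Yv b1 b2 i \<omega>" "Yv b1 b2 i \<omega> \<le> 1" by (auto simp: Yv_def)
lemma YN01: "0 \<le> YN b1 b2 N i \<omega>" "YN b1 b2 N i \<omega> \<le> 1" by (auto simp: YN_val)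

lemma Rbar_eq: "Rbar (b1, b2) r \<omega> n = (\<Sum>i\<in>{1..n}. Yv b1 b2 i \<omega>) / real n"
  by (simp add: Rbar_def Yv_def)

lemma card_lt_T: "real (card {i\<in>{1..n}. i < T}) \<le> real T"
proof -
  have "card {i\<in>{1..n}. i < T} \<le> card {..<T}" by (rule card_mono) auto
  then show ?thesis by simp
qed

lemma per_omega:
  assumes cop: "coprime b1 b2" and b1: "b1 \<ge> 2" and b2: "b2 \<ge> 2"
    and T: "\<And>i. i \<ge> T \<Longrightarrow> offaxis \<omega> i"
    and convN: "\<And>N. convergent (\<lambda>n. (\<Sum>i\<in>{1..n}. YN b1 b2 N i \<omega>) / real n)"
  shows "convergent (Rbar (b1, b2) r \<omega>) \<and> lim (Rbar (b1, b2) r \<omega>) \<ge> 1 / zeta (min b1 b2)"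
proof -
  let ?k = "min b1 b2"
  have b1': "b1 \<ge> 1" and b2': "b2 \<ge> 1" and k2: "?k \<ge> 2" using b1 b2 by auto
  let ?D = "\<lambda>N i. \<exists>p. prime p \<and> N < p \<and> p ^ ?k dvd i"
  have pt: "\<bar>Yv b1 b2 i \<omega> - YN b1 b2 N i \<omega>\<bar> \<le> (if i < T then 1 else 0) + (if ?D N i then 1 else 0)" for N i
  proof (cases "i < T")
    case True
    have "\<bar>Yv b1 b2 i \<omega> - YN b1 b2 N i \<omega>\<bar> \<le> 1" using Yv01[of b1 b2 i \<omega>] YN01[of b1 b2 N i \<omega>] by linarith
    then show ?thesis using True by simp
  next
    case False
    then show ?thesis using diff_bound[OF cop b1' b2' T[of i], of N] by simp
  qed
  have close: "\<bar>Rbar (b1, b2) r \<omega> n - (\<Sum>i\<in>{1..n}. YN b1 b2 N i \<omega>) / real n\<bar> \<le> real T / real n + 1 / real N"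
    if N1: "N \<ge> 1" and n1: "n \<ge> 1" for N n
  proof -
    have "\<bar>(\<Sum>i\<in>{1..n}. Yv b1 b2 i \<omega>) - (\<Sum>i\<in>{1..n}. YN b1 b2 N i \<omega>)\<bar>
        = \<bar>\<Sum>i\<in>{1..n}. Yv b1 b2 i \<omega> - YN b1 b2 N i \<omega>\<bar>" by (simp add: sum_subtractf)
    also have "\<dots> \<le> (\<Sum>i\<in>{1..n}. \<bar>Yv b1 b2 i \<omega> - YN b1 b2 N i \<omega>\<bar>)" by (rule sum_abs)
    also have "\<dots> \<le> (\<Sum>i\<in>{1..n}. (if i < T then 1 else 0) + (if ?D N i then 1 else 0))"
      by (rule sum_mono) (rule pt)
    also have "\<dots> = real (card {i\<in>{1..n}. i < T}) + real (card {i\<in>{1..n}. ?D N i})"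
      by (simp add: sum.distrib sum_ind_card)
    also have "\<dots> \<le> real T + real n / real N"
      using card_lt_T[of n T] tail_count[OF N1 k2, of n] by linarith
    finally have h: "\<bar>(\<Sum>i\<in>{1..n}. Yv b1 b2 i \<omega>) - (\<Sum>i\<in>{1..n}. YN b1 b2 N i \<omega>)\<bar> \<le> real T + real n / real N" .
    have npos: "real n > 0" using n1 by simp
    have "\<bar>Rbar (b1, b2) r \<omega> n - (\<Sum>i\<in>{1..n}. YN b1 b2 N i \<omega>) / real n\<bar>
        = \<bar>(\<Sum>i\<in>{1..n}. Yv b1 b2 i \<omega>) - (\<Sum>i\<in>{1..n}. YN b1 b2 N i \<omega>)\<bar> / real n"
      unfolding Rbar_eq using npos by (simp add: diff_divide_distrib[symmetric] abs_divide)
    also have "\<dots> \<le> (real T + real n / real N) / real n" using h npos by (intro divide_right_mono) auto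
    also have "\<dots> = real T / real n + 1 / real N" using npos by (simp add: field_simps)
    finally show ?thesis .
  qed
  have conv: "convergent (Rbar (b1, b2) r \<omega>)"
    by (rule cauchy_approx[OF convN _ close]) auto
  have A0: "Rbar (b1, b2) r \<omega> n \<ge> 0" for n
  proof -
    have "0 \<le> (\<Sum>i\<in>{1..n}. Yv b1 b2 i \<omega>)" by (rule sum_nonneg) (rule Yv01)
    then show ?thesis unfolding Rbar_eq by simp
  qed
  have Qb: "real (Qf ?k n) \<le> real n * Rbar (b1, b2) r \<omega> n + real T" for n
  proof -
    have pt2: "(if kfree ?k i then 1 else 0) - (if i < T then 1 else 0) \<le> Yv b1 b2 i \<omega>" for i
    proof (cases "i < T")
      case True then show ?thesis using Yv01[of b1 b2 i \<omega>] by auto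
    next
      case False
      then show ?thesis using kfree_vis[OF cop b1' b2' T[of i]] Yv01[of b1 b2 i \<omega>] by auto
    qed
    have "real (Qf ?k n) - real (card {i\<in>{1..n}. i < T}) =
        (\<Sum>i\<in>{1..n}. (if kfree ?k i then 1 else 0) - (if i < T then 1 else 0))"
      by (simp add: sum_subtractf sum_ind_card Qf_def)
    also have "\<dots> \<le> (\<Sum>i\<in>{1..n}. Yv b1 b2 i \<omega>)" by (rule sum_mono) (rule pt2)
    also have "\<dots> = real n * Rbar (b1, b2) r \<omega> n"
      unfolding Rbar_eq by (cases "n = 0") auto
    finally show ?thesis using card_lt_T[of n T] by linarith
  qed
  have "Rbar (b1, b2) r \<omega> \<longlonglongrightarrow> lim (Rbar (b1, b2) r \<omega>)" using conv by (simp add: convergent_LIMSEQ_iff)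
  then have "lim (Rbar (b1, b2) r \<omega>) \<ge> 1 / zeta ?k" by (rule lower_bound[OF k2 _ A0 Qb])
  with conv show ?thesis by simp
qed

end

theorem mainTheorem3:
  fixes b1 b2 r :: nat and \<alpha> :: "nat \<Rightarrow> real"
  assumes "gcd b1 b2 = 1"
    and "min b1 b2 \<ge> 2"
    and "r \<ge> 1"
    and "\<forall>j \<in> {1..r}. 0 < \<alpha> j \<and> \<alpha> j < 1"
  shows "(AE \<omega> in walk_space r \<alpha>.
            convergent (Rbar (b1, b2) r \<omega>) \<and>
            lim (Rbar (b1, b2) r \<omega>) \<ge> 1 / zeta (min b1 b2))
         \<and> 1 / zeta (min b1 b2) \<ge> 1 / zeta 2
         \<and> 1 / zeta 2 = 6 / pi ^ 2"
proof -
  interpret walks r \<alpha> using assms(4) by unfold_locales auto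
  have cop: "coprime b1 b2" using assms(1) by (simp add: coprime_iff_gcd_eq_1)
  have b1: "b1 \<ge> 2" and b2: "b2 \<ge> 2" using assms(2) by auto
  have AE1: "AE \<omega> in walk_space r \<alpha>. \<exists>T. \<forall>i\<ge>T. offaxis \<omega> i" by (rule AE_offaxis)
  have AE2: "AE \<omega> in walk_space r \<alpha>. \<forall>N. convergent (\<lambda>n. (\<Sum>i\<in>{1..n}. YN b1 b2 N i \<omega>) / real n)"
    unfolding AE_all_countable using conv_YN by blast
  have part1: "AE \<omega> in walk_space r \<alpha>.
            convergent (Rbar (b1, b2) r \<omega>) \<and>
            lim (Rbar (b1, b2) r \<omega>) \<ge> 1 / zeta (min b1 b2)"
    using AE1 AE2
  proof eventually_elim
    case (elim \<omega>)
    then obtain T where T: "\<And>i. i \<ge> T \<Longrightarrow> offaxis \<omega> i" by blast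
    show ?case by (rule per_omega[OF cop b1 b2 T]) (use elim in auto)
  qed
  have k2: "min b1 b2 \<ge> 2" using assms(2) .
  have part2: "1 / zeta (min b1 b2) \<ge> 1 / zeta 2"
    using zeta_ge1[OF k2] zeta_le2[OF k2] by (intro divide_left_mono) auto
  have part3: "1 / zeta 2 = 6 / pi ^ 2" by (simp add: zeta2)
  show ?thesis using part1 part2 part3 by blast
qed

end
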